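(* Let $H$ be a finite dimensional Hopf algebra over a field $\mathbb{K}$ with coproduct $\Delta(x)=x_{(1)}\otimes x_{(2)}$ (Sweedler notation), counit $\epsilon$ and antipode $S$. Let $\mu_R\in H^*$ be a right integral and $e_R\in H$ a right cointegral, normalized so that $\mu_R(e_R)=1$. Put $a=\mu_R(e_{R(2)})\,e_{R(1)}\in H$, $\alpha=\mu_R(\,\cdot\,e_R)\in H^*$ (i.e. $\alpha(x)=\mu_R(xe_R)$), $q=\alpha(a)\in\mathbb{K}$, $e_L=S^{-1}(e_R)$ and $\mu_L=\mu_R\circ S$. Then $$S(e_R)=q\,e_L\qquad\text{and}\qquad \mu_L(e_R)=q.$$
   Context: A right integral of $H$ is an element $\mu_R\in H^*$ with $\mu_R(x_{(1)})x_{(2)}=\mu_R(x)1_H$ for all $x\in H$; a right cointegral is an element $e_R\in H$ with $e_Rx=\epsilon(x)e_R$ for all $x\in H$. For a finite dimensional Hopf algebra nonzero such elements exist, are unique up to scalars, and can be chosen with $\mu_R(e_R)=1$; the antipode is invertible. *)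

theory Defs
  imports Main
begin

text \<open>A finite dimensional algebra/coalgebra over a field 'k is described by
structure constants with respect to a basis indexed by a finite type 'n.
Elements of H are coordinate vectors x :: 'n \<Rightarrow> 'k (x = sum of x i * b_i),
elements of H \<otimes> H are coordinate functions on 'n \<times> 'n, elements of
H \<otimes> H \<otimes> H are coordinate functions on 'n \<times> 'n \<times> 'n,
and linear functionals on H (elements of H^* ) are given by their values on the
basis, phi :: 'n \<Rightarrow> 'k.

Structure constants:
  b_i b_j = sum_k M i j k b_k,   1 = sum_k U k b_k,
  Delta b_i = sum_{j,k} D i j k b_j \<otimes> b_k,   eps b_i = E i,
  S b_i = sum_j A i j b_j.\<close>

definition smul :: "'k::times \<Rightarrow> ('n \<Rightarrow> 'k) \<Rightarrow> ('n \<Rightarrow> 'k)" where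
  "smul c x = (\<lambda>i. c * x i)"

definition ev :: "('n::finite \<Rightarrow> 'k::comm_semiring_1) \<Rightarrow> ('n \<Rightarrow> 'k) \<Rightarrow> 'k" where
  "ev phi x = (\<Sum>i\<in>UNIV. phi i * x i)"

definition mul :: "('n::finite \<Rightarrow> 'n \<Rightarrow> 'n \<Rightarrow> 'k::comm_semiring_1)
    \<Rightarrow> ('n \<Rightarrow> 'k) \<Rightarrow> ('n \<Rightarrow> 'k) \<Rightarrow> ('n \<Rightarrow> 'k)" where
  "mul M x y = (\<lambda>k. \<Sum>i\<in>UNIV. \<Sum>j\<in>UNIV. x i * y j * M i j k)"

definition cop :: "('n::finite \<Rightarrow> 'n \<Rightarrow> 'n \<Rightarrow> 'k::comm_semiring_1)
    \<Rightarrow> ('n \<Rightarrow> 'k) \<Rightarrow> ('n \<times> 'n \<Rightarrow> 'k)" where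
  "cop D x = (\<lambda>(j, k). \<Sum>i\<in>UNIV. x i * D i j k)"

definition cou :: "('n::finite \<Rightarrow> 'k::comm_semiring_1) \<Rightarrow> ('n \<Rightarrow> 'k) \<Rightarrow> 'k" where
  "cou E x = (\<Sum>i\<in>UNIV. E i * x i)"

definition ant :: "('n::finite \<Rightarrow> 'n \<Rightarrow> 'k::comm_semiring_1) \<Rightarrow> ('n \<Rightarrow> 'k) \<Rightarrow> ('n \<Rightarrow> 'k)" where
  "ant A x = (\<lambda>j. \<Sum>i\<in>UNIV. x i * A i j)"

definition cop_left :: "('n::finite \<Rightarrow> 'n \<Rightarrow> 'n \<Rightarrow> 'k::comm_semiring_1)
    \<Rightarrow> ('n \<times> 'n \<Rightarrow> 'k) \<Rightarrow> ('n \<times> 'n \<times> 'n \<Rightarrow> 'k)" where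
  "cop_left D t = (\<lambda>(a, b, c). \<Sum>i\<in>UNIV. t (i, c) * D i a b)"

definition cop_right :: "('n::finite \<Rightarrow> 'n \<Rightarrow> 'n \<Rightarrow> 'k::comm_semiring_1)
    \<Rightarrow> ('n \<times> 'n \<Rightarrow> 'k) \<Rightarrow> ('n \<times> 'n \<times> 'n \<Rightarrow> 'k)" where
  "cop_right D t = (\<lambda>(a, b, c). \<Sum>j\<in>UNIV. t (a, j) * D j b c)"

definition cou_left :: "('n::finite \<Rightarrow> 'k::comm_semiring_1) \<Rightarrow> ('n \<times> 'n \<Rightarrow> 'k) \<Rightarrow> ('n \<Rightarrow> 'k)" where
  "cou_left E t = (\<lambda>c. \<Sum>i\<in>UNIV. E i * t (i, c))"

definition cou_right :: "('n::finite \<Rightarrow> 'k::comm_semiring_1) \<Rightarrow> ('n \<times> 'n \<Rightarrow> 'k) \<Rightarrow> ('n \<Rightarrow> 'k)" where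
  "cou_right E t = (\<lambda>a. \<Sum>j\<in>UNIV. E j * t (a, j))"

definition tmul :: "('n::finite \<Rightarrow> 'n \<Rightarrow> 'n \<Rightarrow> 'k::comm_semiring_1)
    \<Rightarrow> ('n \<times> 'n \<Rightarrow> 'k) \<Rightarrow> ('n \<times> 'n \<Rightarrow> 'k) \<Rightarrow> ('n \<times> 'n \<Rightarrow> 'k)" where
  "tmul M t s = (\<lambda>(k, l). \<Sum>i\<in>UNIV. \<Sum>j\<in>UNIV. \<Sum>i'\<in>UNIV. \<Sum>j'\<in>UNIV.
      t (i, j) * s (i', j') * M i i' k * M j j' l)"

definition tunit :: "('n \<Rightarrow> 'k::times) \<Rightarrow> ('n \<times> 'n \<Rightarrow> 'k)" where
  "tunit U = (\<lambda>(j, k). U j * U k)"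

definition ant_left :: "('n::finite \<Rightarrow> 'n \<Rightarrow> 'n \<Rightarrow> 'k::comm_semiring_1) \<Rightarrow> ('n \<Rightarrow> 'n \<Rightarrow> 'k)
    \<Rightarrow> ('n \<times> 'n \<Rightarrow> 'k) \<Rightarrow> ('n \<Rightarrow> 'k)" where
  "ant_left M A t = (\<lambda>k. \<Sum>i\<in>UNIV. \<Sum>j\<in>UNIV. \<Sum>p\<in>UNIV. t (i, j) * A i p * M p j k)"

definition ant_right :: "('n::finite \<Rightarrow> 'n \<Rightarrow> 'n \<Rightarrow> 'k::comm_semiring_1) \<Rightarrow> ('n \<Rightarrow> 'n \<Rightarrow> 'k)
    \<Rightarrow> ('n \<times> 'n \<Rightarrow> 'k) \<Rightarrow> ('n \<Rightarrow> 'k)" where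
  "ant_right M A t = (\<lambda>k. \<Sum>i\<in>UNIV. \<Sum>j\<in>UNIV. \<Sum>p\<in>UNIV. t (i, j) * A j p * M i p k)"

definition hopf_algebra ::
  "('n::finite \<Rightarrow> 'n \<Rightarrow> 'n \<Rightarrow> 'k::field) \<Rightarrow> ('n \<Rightarrow> 'k) \<Rightarrow> ('n \<Rightarrow> 'n \<Rightarrow> 'n \<Rightarrow> 'k)
    \<Rightarrow> ('n \<Rightarrow> 'k) \<Rightarrow> ('n \<Rightarrow> 'n \<Rightarrow> 'k) \<Rightarrow> bool" where
  "hopf_algebra M U D E A \<longleftrightarrow>
     (\<forall>x y z. mul M (mul M x y) z = mul M x (mul M y z)) \<and>
     (\<forall>x. mul M U x = x) \<and> (\<forall>x. mul M x U = x) \<and>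
     (\<forall>x. cop_left D (cop D x) = cop_right D (cop D x)) \<and>
     (\<forall>x. cou_left E (cop D x) = x) \<and> (\<forall>x. cou_right E (cop D x) = x) \<and>
     (\<forall>x y. cop D (mul M x y) = tmul M (cop D x) (cop D y)) \<and>
     cop D U = tunit U \<and>
     (\<forall>x y. cou E (mul M x y) = cou E x * cou E y) \<and> cou E U = 1 \<and>
     (\<forall>x. ant_left M A (cop D x) = smul (cou E x) U) \<and>
     (\<forall>x. ant_right M A (cop D x) = smul (cou E x) U)"

definition right_integral :: "('n::finite \<Rightarrow> 'n \<Rightarrow> 'n \<Rightarrow> 'k::field) \<Rightarrow> ('n \<Rightarrow> 'k)
    \<Rightarrow> ('n \<Rightarrow> 'n \<Rightarrow> 'n \<Rightarrow> 'k) \<Rightarrow> ('n \<Rightarrow> 'k) \<Rightarrow> bool" where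
  "right_integral M U D mu \<longleftrightarrow>
     (\<forall>x. (\<lambda>c. \<Sum>i\<in>UNIV. mu i * cop D x (i, c)) = smul (ev mu x) U)"

definition right_cointegral :: "('n::finite \<Rightarrow> 'n \<Rightarrow> 'n \<Rightarrow> 'k::field) \<Rightarrow> ('n \<Rightarrow> 'k)
    \<Rightarrow> ('n \<Rightarrow> 'k) \<Rightarrow> bool" where
  "right_cointegral M E e \<longleftrightarrow> (\<forall>x. mul M e x = smul (cou E x) e)"

end

theory Submission
  imports Defs
begin


lemma ifmult1[simp]: "(if P then 1 else 0) * (x::'k::comm_ring_1) = (if P then x else 0)" by simp
lemma ifz1[simp]: "(if P then a else 0) * (b::'k::comm_ring_1) = (if P then a * b else 0)" by simp
lemma ifz2[simp]: "(b::'k::comm_ring_1) * (if P then a else 0) = (if P then b * a else 0)" by simp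
lemma ifmult2[simp]: "(x::'k::comm_ring_1) * (if P then 1 else 0) = (if P then x else 0)" by simp

lemma sum_rot3: "(\<Sum>a\<in>P. \<Sum>b\<in>Q. \<Sum>c\<in>R. f a b c) = (\<Sum>c\<in>R. \<Sum>a\<in>P. \<Sum>b\<in>Q. f a b c)"
proof -
  have "(\<Sum>a\<in>P. \<Sum>b\<in>Q. \<Sum>c\<in>R. f a b c) = (\<Sum>a\<in>P. \<Sum>c\<in>R. \<Sum>b\<in>Q. f a b c)"
    by (rule sum.cong[OF refl], rule sum.swap)
  also have "\<dots> = (\<Sum>c\<in>R. \<Sum>a\<in>P. \<Sum>b\<in>Q. f a b c)" by (rule sum.swap)
  finally show ?thesis .
qed

lemma sum_swap22: "(\<Sum>a\<in>P. \<Sum>b\<in>Q. \<Sum>c\<in>R. \<Sum>d\<in>S. f a b c d) = (\<Sum>c\<in>R. \<Sum>d\<in>S. \<Sum>a\<in>P. \<Sum>b\<in>Q. f a b c d)"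
proof -
  have "(\<Sum>a\<in>P. \<Sum>b\<in>Q. \<Sum>c\<in>R. \<Sum>d\<in>S. f a b c d) = (\<Sum>a\<in>P. \<Sum>c\<in>R. \<Sum>d\<in>S. \<Sum>b\<in>Q. f a b c d)"
    by (rule sum.cong[OF refl], rule sum_rot3[THEN trans], rule sum_rot3)
  also have "\<dots> = (\<Sum>c\<in>R. \<Sum>d\<in>S. \<Sum>a\<in>P. \<Sum>b\<in>Q. f a b c d)"
    by (rule sum.swap[THEN trans], rule sum.cong[OF refl], rule sum.swap)
  finally show ?thesis .
qed

lemma sum_swap24: "(\<Sum>p\<in>P. \<Sum>q\<in>Q. \<Sum>a\<in>R. \<Sum>b\<in>S. \<Sum>c\<in>T. \<Sum>d\<in>V. f p q a b c d) =
   (\<Sum>a\<in>R. \<Sum>b\<in>S. \<Sum>c\<in>T. \<Sum>d\<in>V. \<Sum>p\<in>P. \<Sum>q\<in>Q. f p q a b c d)"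
  by (rule sum_swap22[THEN trans], rule sum.cong[OF refl], rule sum.cong[OF refl], rule sum_swap22)

lemma sum_rot3': "(\<Sum>a\<in>P. \<Sum>b\<in>Q. \<Sum>c\<in>R. f a b c) = (\<Sum>b\<in>Q. \<Sum>c\<in>R. \<Sum>a\<in>P. f a b c)"
  by (rule sum_rot3[THEN trans], rule sum_rot3)

lemma sum_rot4: "(\<Sum>a\<in>P. \<Sum>b\<in>Q. \<Sum>c\<in>R. \<Sum>d\<in>S. f a b c d) = (\<Sum>b\<in>Q. \<Sum>c\<in>R. \<Sum>d\<in>S. \<Sum>a\<in>P. f a b c d)"
  by (rule sum.swap[THEN trans], rule sum.cong[OF refl], rule sum_rot3')

lemma fac2: "(\<Sum>u\<in>UNIV. \<Sum>v\<in>UNIV. X u * Y v * (W u * Z v)) = (\<Sum>u\<in>UNIV. X u * W u) * (\<Sum>v\<in>UNIV. Y v * (Z v::'k::comm_ring_1))"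
  by (simp add: sum_distrib_left sum_distrib_right mult_ac, rule sum.swap)
lemma swapfac: "(\<Sum>v\<in>UNIV. Y v * (\<Sum>r\<in>UNIV. F v r * G r)) = (\<Sum>r\<in>UNIV. G r * (\<Sum>v\<in>UNIV. Y v * (F v r::'k::comm_ring_1)))"
  by (simp add: sum_distrib_left mult_ac, rule sum.swap)

locale hidx =
  fixes M :: "'n::finite \<Rightarrow> 'n \<Rightarrow> 'n \<Rightarrow> 'k::field" and U :: "'n \<Rightarrow> 'k"
    and D :: "'n \<Rightarrow> 'n \<Rightarrow> 'n \<Rightarrow> 'k" and E :: "'n \<Rightarrow> 'k" and A :: "'n \<Rightarrow> 'n \<Rightarrow> 'k"
  assumes MA: "\<And>i j l m. (\<Sum>k\<in>UNIV. M i j k * M k l m) = (\<Sum>k\<in>UNIV. M j l k * M i k m)"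
    and MU1: "\<And>j k. (\<Sum>i\<in>UNIV. U i * M i j k) = (if j = k then 1 else 0)"
    and MU2: "\<And>i k. (\<Sum>j\<in>UNIV. U j * M i j k) = (if i = k then 1 else 0)"
    and CA: "\<And>x a b c. (\<Sum>i\<in>UNIV. D x i c * D i a b) = (\<Sum>j\<in>UNIV. D x a j * D j b c)"
    and CU1: "\<And>x c. (\<Sum>i\<in>UNIV. E i * D x i c) = (if x = c then 1 else 0)"
    and CU2: "\<And>x a. (\<Sum>j\<in>UNIV. E j * D x a j) = (if x = a then 1 else 0)"
    and DM: "\<And>i j a b. (\<Sum>k\<in>UNIV. M i j k * D k a b) =
       (\<Sum>i1\<in>UNIV. \<Sum>j1\<in>UNIV. \<Sum>i2\<in>UNIV. \<Sum>j2\<in>UNIV. D i i1 j1 * D j i2 j2 * M i1 i2 a * M j1 j2 b)"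
    and DU: "\<And>a b. (\<Sum>k\<in>UNIV. U k * D k a b) = U a * U b"
    and EM: "\<And>i j. (\<Sum>k\<in>UNIV. E k * M i j k) = E i * E j"
    and EU: "(\<Sum>k\<in>UNIV. E k * U k) = 1"
    and AL: "\<And>x k. (\<Sum>a\<in>UNIV. \<Sum>b\<in>UNIV. \<Sum>p\<in>UNIV. D x a b * A a p * M p b k) = E x * U k"
    and AR: "\<And>x k. (\<Sum>a\<in>UNIV. \<Sum>b\<in>UNIV. \<Sum>p\<in>UNIV. D x a b * A b p * M a p k) = E x * U k"
begin

definition sw :: "'n \<Rightarrow> ('n \<Rightarrow> 'n \<Rightarrow> 'k) \<Rightarrow> 'k" where
  "sw y F = (\<Sum>a\<in>UNIV. \<Sum>b\<in>UNIV. D y a b * F a b)"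

lemma sw_cmult_left: "sw y (\<lambda>a b. c * F a b) = c * sw y F"
  by (simp add: sw_def sum_distrib_left mult_ac)
lemma sw_cmult_right: "sw y (\<lambda>a b. F a b * c) = sw y F * c"
  by (simp add: sw_def sum_distrib_right sum_distrib_left mult_ac)
lemma sw_sum: "sw y (\<lambda>a b. \<Sum>k\<in>UNIV. F k a b) = (\<Sum>k\<in>UNIV. sw y (F k))"
  unfolding sw_def by (simp only: sum_distrib_left, rule sum_rot3)
lemma sw_add: "sw y (\<lambda>a b. F a b + G a b) = sw y F + sw y G"
  by (simp add: sw_def distrib_left sum.distrib)
lemma sw_fubini: "sw y (\<lambda>a b. sw z (\<lambda>c d. F a b c d)) = sw z (\<lambda>c d. sw y (\<lambda>a b. F a b c d))"
proof -
  have "sw y (\<lambda>a b. sw z (\<lambda>c d. F a b c d)) = (\<Sum>a\<in>UNIV. \<Sum>b\<in>UNIV. \<Sum>c\<in>UNIV. \<Sum>d\<in>UNIV. D y a b * (D z c d * F a b c d))"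
    by (simp add: sw_def sum_distrib_left)
  also have "\<dots> = (\<Sum>c\<in>UNIV. \<Sum>d\<in>UNIV. \<Sum>a\<in>UNIV. \<Sum>b\<in>UNIV. D y a b * (D z c d * F a b c d))"
    by (rule sum_swap22)
  also have "\<dots> = sw z (\<lambda>c d. sw y (\<lambda>a b. F a b c d))"
    by (simp add: sw_def sum_distrib_left mult_ac)
  finally show ?thesis .
qed

lemma counitL: "sw y (\<lambda>a b. E a * G b) = G y"
proof -
  have "sw y (\<lambda>a b. E a * G b) = (\<Sum>b\<in>UNIV. \<Sum>a\<in>UNIV. D y a b * (E a * G b))"
    unfolding sw_def by (rule sum.swap)
  also have "\<dots> = (\<Sum>b\<in>UNIV. (\<Sum>a\<in>UNIV. E a * D y a b) * G b)"
    by (simp add: sum_distrib_right sum_distrib_left mult_ac)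
  also have "\<dots> = G y" by (simp add: CU1)
  finally show ?thesis .
qed

lemma counitR: "sw y (\<lambda>a b. E b * G a) = G y"
proof -
  have "sw y (\<lambda>a b. E b * G a) = (\<Sum>a\<in>UNIV. (\<Sum>b\<in>UNIV. E b * D y a b) * G a)"
    unfolding sw_def by (simp add: sum_distrib_right sum_distrib_left mult_ac)
  also have "\<dots> = G y" by (simp add: CU2)
  finally show ?thesis .
qed

lemma coassoc: "sw y (\<lambda>p q. sw p (\<lambda>a b. F a b q)) = sw y (\<lambda>a r. sw r (\<lambda>b q. F a b q))"
proof -
  have "sw y (\<lambda>p q. sw p (\<lambda>a b. F a b q)) = (\<Sum>p\<in>UNIV. \<Sum>q\<in>UNIV. \<Sum>a\<in>UNIV. \<Sum>b\<in>UNIV. D y p q * (D p a b * F a b q))"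
    by (simp add: sw_def sum_distrib_left)
  also have "\<dots> = (\<Sum>a\<in>UNIV. \<Sum>b\<in>UNIV. \<Sum>p\<in>UNIV. \<Sum>q\<in>UNIV. D y p q * (D p a b * F a b q))"
    by (rule sum_swap22)
  also have "\<dots> = (\<Sum>a\<in>UNIV. \<Sum>b\<in>UNIV. \<Sum>q\<in>UNIV. (\<Sum>p\<in>UNIV. D y p q * D p a b) * F a b q)"
    by (rule sum.cong[OF refl], rule sum.cong[OF refl], subst sum.swap, simp add: sum_distrib_right sum_distrib_left mult_ac)
  also have "\<dots> = (\<Sum>a\<in>UNIV. \<Sum>b\<in>UNIV. \<Sum>q\<in>UNIV. (\<Sum>r\<in>UNIV. D y a r * D r b q) * F a b q)"
    by (simp add: CA)
  also have "\<dots> = (\<Sum>a\<in>UNIV. \<Sum>b\<in>UNIV. \<Sum>r\<in>UNIV. \<Sum>q\<in>UNIV. D y a r * (D r b q * F a b q))"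
    by (rule sum.cong[OF refl], rule sum.cong[OF refl], rule trans[OF _ sum.swap], simp add: sum_distrib_right sum_distrib_left mult_ac)
  also have "\<dots> = sw y (\<lambda>a r. sw r (\<lambda>b q. F a b q))"
    by (simp add: sw_def sum_distrib_left, rule sum.cong[OF refl], rule sum.swap)
  finally show ?thesis .
qed

lemma multsw: "(\<Sum>k\<in>UNIV. M i j k * sw k F) = sw i (\<lambda>a1 b1. sw j (\<lambda>a2 b2. \<Sum>p\<in>UNIV. \<Sum>q\<in>UNIV. M a1 a2 p * M b1 b2 q * F p q))"
proof -
  have "(\<Sum>k\<in>UNIV. M i j k * sw k F) = (\<Sum>k\<in>UNIV. \<Sum>p\<in>UNIV. \<Sum>q\<in>UNIV. M i j k * D k p q * F p q)"
    by (simp add: sw_def sum_distrib_left mult_ac)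
  also have "\<dots> = (\<Sum>p\<in>UNIV. \<Sum>q\<in>UNIV. \<Sum>k\<in>UNIV. M i j k * D k p q * F p q)"
    by (rule sum_rot3')
  also have "\<dots> = (\<Sum>p\<in>UNIV. \<Sum>q\<in>UNIV. (\<Sum>k\<in>UNIV. M i j k * D k p q) * F p q)"
    by (simp add: sum_distrib_right)
  also have "\<dots> = (\<Sum>p\<in>UNIV. \<Sum>q\<in>UNIV. \<Sum>i1\<in>UNIV. \<Sum>j1\<in>UNIV. \<Sum>i2\<in>UNIV. \<Sum>j2\<in>UNIV.
       D i i1 j1 * D j i2 j2 * M i1 i2 p * M j1 j2 q * F p q)"
    by (simp add: DM sum_distrib_right)
  also have "\<dots> = (\<Sum>i1\<in>UNIV. \<Sum>j1\<in>UNIV. \<Sum>i2\<in>UNIV. \<Sum>j2\<in>UNIV. \<Sum>p\<in>UNIV. \<Sum>q\<in>UNIV.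
       D i i1 j1 * D j i2 j2 * M i1 i2 p * M j1 j2 q * F p q)"
    by (rule sum_swap24)
  also have "\<dots> = sw i (\<lambda>a1 b1. sw j (\<lambda>a2 b2. \<Sum>p\<in>UNIV. \<Sum>q\<in>UNIV. M a1 a2 p * M b1 b2 q * F p q))"
    by (simp add: sw_def sum_distrib_left mult_ac)
  finally show ?thesis .
qed

lemma antL: "sw x (\<lambda>a b. \<Sum>p\<in>UNIV. A a p * M p b k) = E x * U k"
  using AL[of x k] by (simp add: sw_def sum_distrib_left mult_ac)
lemma antR: "sw x (\<lambda>a b. \<Sum>p\<in>UNIV. A b p * M a p k) = E x * U k"
  using AR[of x k] by (simp add: sw_def sum_distrib_left mult_ac)

end


locale calg =
  fixes C :: "'c \<Rightarrow> ('c \<Rightarrow> 'c \<Rightarrow> 'k::field) \<Rightarrow> 'k" and EC :: "'c \<Rightarrow> 'k"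
    and M :: "'n::finite \<Rightarrow> 'n \<Rightarrow> 'n \<Rightarrow> 'k" and U :: "'n \<Rightarrow> 'k"
  assumes C_sum: "\<And>c F. C c (\<lambda>a b. \<Sum>k\<in>(UNIV::'n set). F k a b) = (\<Sum>k\<in>UNIV. C c (F k))"
    and C_cmult: "\<And>c x F. C c (\<lambda>a b. x * F a b) = x * C c F"
    and C_coassoc: "\<And>y F. C y (\<lambda>p q. C p (\<lambda>a b. F a b q)) = C y (\<lambda>a r. C r (\<lambda>b q. F a b q))"
    and C_counitL: "\<And>y G. C y (\<lambda>a b. EC a * G b) = G y"
    and C_counitR: "\<And>y G. C y (\<lambda>a b. EC b * G a) = G y"
    and MA: "\<And>i j l m. (\<Sum>k\<in>UNIV. M i j k * M k l m) = (\<Sum>k\<in>UNIV. M j l k * M i k m)"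
    and MU1: "\<And>j k. (\<Sum>i\<in>UNIV. U i * M i j k) = (if j = k then 1 else 0)"
    and MU2: "\<And>i k. (\<Sum>j\<in>UNIV. U j * M i j k) = (if i = k then 1 else 0)"
begin

lemma C_cmult_right: "C c (\<lambda>a b. F a b * x) = C c F * x"
  using C_cmult[of c x F] by (simp add: mult.commute)

lemma C_in: "(\<Sum>k\<in>(UNIV::'n set). C c (F k)) = C c (\<lambda>a b. \<Sum>k\<in>UNIV. F k a b)"
  "x * C c G = C c (\<lambda>a b. x * G a b)" "C c G * x = C c (\<lambda>a b. G a b * x)"
  by (simp_all add: C_sum C_cmult C_cmult_right)

lemma C_sum2: "C c (\<lambda>a b. \<Sum>k\<in>(UNIV::'n set). \<Sum>l\<in>(UNIV::'n set). F k l a b) = (\<Sum>k\<in>UNIV. \<Sum>l\<in>UNIV. C c (F k l))"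
  by (simp add: C_sum)

definition conv :: "('c \<Rightarrow> 'n \<Rightarrow> 'k) \<Rightarrow> ('c \<Rightarrow> 'n \<Rightarrow> 'k) \<Rightarrow> 'c \<Rightarrow> 'n \<Rightarrow> 'k" where
  "conv f g c k = C c (\<lambda>a b. \<Sum>p\<in>UNIV. \<Sum>r\<in>UNIV. f a p * g b r * M p r k)"

definition unitc :: "'c \<Rightarrow> 'n \<Rightarrow> 'k" where "unitc c k = EC c * U k"

lemma conv_assoc: "conv (conv f g) h = conv f (conv g h)"
proof (intro ext)
  fix c k
  have L: "conv (conv f g) h c k = C c (\<lambda>a b. C a (\<lambda>a1 a2.
      \<Sum>p\<in>UNIV. \<Sum>r\<in>UNIV. \<Sum>p1\<in>UNIV. \<Sum>r1\<in>UNIV. f a1 p1 * g a2 r1 * M p1 r1 p * h b r * M p r k))"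
    unfolding conv_def by (simp add: C_in sum_distrib_left sum_distrib_right)
  have R: "conv f (conv g h) c k = C c (\<lambda>a1 a'. C a' (\<lambda>a2 b.
      \<Sum>p1\<in>UNIV. \<Sum>q\<in>UNIV. \<Sum>r1\<in>UNIV. \<Sum>r\<in>UNIV. f a1 p1 * (g a2 r1 * h b r * M r1 r q) * M p1 q k))"
    unfolding conv_def by (simp add: C_in sum_distrib_left sum_distrib_right)
  have I: "(\<Sum>p\<in>UNIV. \<Sum>r\<in>UNIV. \<Sum>p1\<in>UNIV. \<Sum>r1\<in>UNIV. f a1 p1 * g a2 r1 * M p1 r1 p * h b r * M p r k)
     = (\<Sum>p1\<in>UNIV. \<Sum>q\<in>UNIV. \<Sum>r1\<in>UNIV. \<Sum>r\<in>UNIV. f a1 p1 * (g a2 r1 * h b r * M r1 r q) * M p1 q k)"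
    for a1 a2 b
  proof -
    have "(\<Sum>p\<in>UNIV. \<Sum>r\<in>UNIV. \<Sum>p1\<in>UNIV. \<Sum>r1\<in>UNIV. f a1 p1 * g a2 r1 * M p1 r1 p * h b r * M p r k)
      = (\<Sum>p1\<in>UNIV. \<Sum>r1\<in>UNIV. \<Sum>p\<in>UNIV. \<Sum>r\<in>UNIV. f a1 p1 * g a2 r1 * M p1 r1 p * h b r * M p r k)"
      by (rule sum_swap22)
    also have "\<dots> = (\<Sum>p1\<in>UNIV. \<Sum>r1\<in>UNIV. \<Sum>r\<in>UNIV. \<Sum>p\<in>UNIV. f a1 p1 * g a2 r1 * M p1 r1 p * h b r * M p r k)"
      by (rule sum.cong[OF refl], rule sum.cong[OF refl], rule sum.swap)
    also have "\<dots> = (\<Sum>p1\<in>UNIV. \<Sum>r1\<in>UNIV. \<Sum>r\<in>UNIV. f a1 p1 * g a2 r1 * h b r * (\<Sum>p\<in>UNIV. M p1 r1 p * M p r k))"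
      by (simp add: sum_distrib_left mult_ac)
    also have "\<dots> = (\<Sum>p1\<in>UNIV. \<Sum>r1\<in>UNIV. \<Sum>r\<in>UNIV. f a1 p1 * g a2 r1 * h b r * (\<Sum>q\<in>UNIV. M r1 r q * M p1 q k))"
      by (simp add: MA)
    also have "\<dots> = (\<Sum>p1\<in>UNIV. \<Sum>r1\<in>UNIV. \<Sum>r\<in>UNIV. \<Sum>q\<in>UNIV. f a1 p1 * (g a2 r1 * h b r * M r1 r q) * M p1 q k)"
      by (simp add: sum_distrib_left mult_ac)
    also have "\<dots> = (\<Sum>p1\<in>UNIV. \<Sum>q\<in>UNIV. \<Sum>r1\<in>UNIV. \<Sum>r\<in>UNIV. f a1 p1 * (g a2 r1 * h b r * M r1 r q) * M p1 q k)"
      by (rule sum.cong[OF refl], rule sum_rot3)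
    finally show ?thesis .
  qed
  show "conv (conv f g) h c k = conv f (conv g h) c k"
    unfolding L R C_coassoc I ..
qed

lemma conv_unit_right: "conv f unitc = f"
proof (intro ext)
  fix c k
  have "conv f unitc c k = C c (\<lambda>a b. EC b * (\<Sum>p\<in>UNIV. f a p * (\<Sum>r\<in>UNIV. U r * M p r k)))"
    unfolding conv_def unitc_def by (simp add: sum_distrib_left mult_ac)
  also have "\<dots> = C c (\<lambda>a b. EC b * f a k)" by (simp add: MU2)
  also have "\<dots> = f c k" by (rule C_counitR)
  finally show "conv f unitc c k = f c k" .
qed

lemma conv_unit_left: "conv unitc f = f"
proof (intro ext)
  fix c k
  have "conv unitc f c k = C c (\<lambda>a b. EC a * (\<Sum>r\<in>UNIV. f b r * (\<Sum>p\<in>UNIV. U p * M p r k)))"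
    unfolding conv_def unitc_def by (rule arg_cong[where f="C c"], intro ext, simp add: sum_distrib_left mult_ac, rule sum.swap)
  also have "\<dots> = C c (\<lambda>a b. EC a * f b k)" by (simp add: MU1)
  also have "\<dots> = f c k" by (rule C_counitL)
  finally show "conv unitc f c k = f c k" .
qed

lemma conv_inv_unique:
  assumes "conv g f = unitc" and "conv f h = unitc" shows "g = h"
proof -
  have "g = conv g unitc" by (simp add: conv_unit_right)
  also have "\<dots> = conv g (conv f h)" using assms(2) by simp
  also have "\<dots> = conv (conv g f) h" by (simp add: conv_assoc)
  also have "\<dots> = h" using assms(1) by (simp add: conv_unit_left)
  finally show ?thesis .
qed
end


context hidx begin

lemma antL': "(\<Sum>p\<in>UNIV. sw x (\<lambda>a b. A a p * M p b k)) = E x * U k"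
  using antL[of x k] by (simp add: sw_sum)
lemma antR': "(\<Sum>p\<in>UNIV. sw x (\<lambda>a b. A b p * M a p k)) = E x * U k"
  using antR[of x k] by (simp add: sw_sum)

definition swp :: "'n \<times> 'n \<Rightarrow> ('n \<times> 'n \<Rightarrow> 'n \<times> 'n \<Rightarrow> 'k) \<Rightarrow> 'k" where
  "swp y F = sw (fst y) (\<lambda>a1 b1. sw (snd y) (\<lambda>a2 b2. F (a1, a2) (b1, b2)))"

lemma calg_pairs: "calg swp (\<lambda>y. E (fst y) * E (snd y)) M U"
proof
  show "swp c (\<lambda>a b. \<Sum>k\<in>UNIV. F k a b) = (\<Sum>k\<in>UNIV. swp c (F k))" for c and F :: "'n \<Rightarrow> _"
    by (simp add: swp_def sw_sum)
  show "swp c (\<lambda>a b. x * F a b) = x * swp c F" for c x F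
    by (simp add: swp_def sw_cmult_left)
  show "swp y (\<lambda>p q. swp p (\<lambda>a b. F a b q)) = swp y (\<lambda>a r. swp r (\<lambda>b q. F a b q))" for y F
  proof -
    obtain y1 y2 where y: "y = (y1, y2)" by (cases y)
    have "swp y (\<lambda>p q. swp p (\<lambda>a b. F a b q)) =
      sw y1 (\<lambda>p1 q1. sw y2 (\<lambda>p2 q2. sw p1 (\<lambda>a1 b1. sw p2 (\<lambda>a2 b2. F (a1,a2) (b1,b2) (q1,q2)))))"
      by (simp add: swp_def y)
    also have "\<dots> = sw y1 (\<lambda>p1 q1. sw p1 (\<lambda>a1 b1. sw y2 (\<lambda>p2 q2. sw p2 (\<lambda>a2 b2. F (a1,a2) (b1,b2) (q1,q2)))))"
      by (subst sw_fubini, rule refl)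
    also have "\<dots> = sw y1 (\<lambda>p1 q1. sw p1 (\<lambda>a1 b1. sw y2 (\<lambda>a2 r2. sw r2 (\<lambda>b2 q2. F (a1,a2) (b1,b2) (q1,q2)))))"
      by (subst coassoc, rule refl)
    also have "\<dots> = sw y1 (\<lambda>a1 r1. sw r1 (\<lambda>b1 q1. sw y2 (\<lambda>a2 r2. sw r2 (\<lambda>b2 q2. F (a1,a2) (b1,b2) (q1,q2)))))"
      by (rule coassoc)
    also have "\<dots> = sw y1 (\<lambda>a1 r1. sw y2 (\<lambda>a2 r2. sw r1 (\<lambda>b1 q1. sw r2 (\<lambda>b2 q2. F (a1,a2) (b1,b2) (q1,q2)))))"
      by (subst sw_fubini, rule refl)
    also have "\<dots> = swp y (\<lambda>a r. swp r (\<lambda>b q. F a b q))"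
      by (simp add: swp_def y)
    finally show ?thesis .
  qed
  show "swp y (\<lambda>a b. E (fst a) * E (snd a) * G b) = G y" for y G
    by (simp add: swp_def mult.assoc sw_cmult_left counitL)
  show "swp y (\<lambda>a b. E (fst b) * E (snd b) * G a) = G y" for y G
    by (simp add: swp_def mult.assoc sw_cmult_left counitR)
qed (fact MA MU1 MU2)+


definition ECp :: "'n \<times> 'n \<Rightarrow> 'k" where "ECp y = E (fst y) * E (snd y)"

interpretation pc: calg swp ECp M U
  unfolding ECp_def by (rule calg_pairs)

lemma claimB_body: "(\<Sum>p\<in>UNIV. \<Sum>r\<in>UNIV. (\<Sum>q\<in>UNIV. M a1 a2 q * A q p) * M b1 b2 r * M p r t)
   = (\<Sum>q\<in>UNIV. \<Sum>r\<in>UNIV. M a1 a2 q * M b1 b2 r * (\<Sum>p\<in>UNIV. A q p * M p r t))"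
proof -
  have "(\<Sum>p\<in>UNIV. \<Sum>r\<in>UNIV. (\<Sum>q\<in>UNIV. M a1 a2 q * A q p) * M b1 b2 r * M p r t)
      = (\<Sum>p\<in>UNIV. \<Sum>r\<in>UNIV. \<Sum>q\<in>UNIV. M a1 a2 q * M b1 b2 r * (A q p * M p r t))"
    by (simp add: sum_distrib_left sum_distrib_right mult_ac)
  also have "\<dots> = (\<Sum>q\<in>UNIV. \<Sum>p\<in>UNIV. \<Sum>r\<in>UNIV. M a1 a2 q * M b1 b2 r * (A q p * M p r t))"
    by (rule sum_rot3)
  also have "\<dots> = (\<Sum>q\<in>UNIV. \<Sum>r\<in>UNIV. \<Sum>p\<in>UNIV. M a1 a2 q * M b1 b2 r * (A q p * M p r t))"
    by (rule sum.cong[OF refl], rule sum.swap)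
  also have "\<dots> = (\<Sum>q\<in>UNIV. \<Sum>r\<in>UNIV. M a1 a2 q * M b1 b2 r * (\<Sum>p\<in>UNIV. A q p * M p r t))"
    by (simp add: sum_distrib_left)
  finally show ?thesis .
qed

definition fm :: "'n \<times> 'n \<Rightarrow> 'n \<Rightarrow> 'k" where "fm y k = M (fst y) (snd y) k"
definition gm :: "'n \<times> 'n \<Rightarrow> 'n \<Rightarrow> 'k" where "gm y k = (\<Sum>p\<in>UNIV. M (fst y) (snd y) p * A p k)"
definition hm :: "'n \<times> 'n \<Rightarrow> 'n \<Rightarrow> 'k" where
  "hm y k = (\<Sum>p\<in>UNIV. \<Sum>r\<in>UNIV. A (snd y) p * A (fst y) r * M p r k)"

lemma claimB: "pc.conv gm fm = pc.unitc"
proof (intro ext)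
  fix y :: "'n \<times> 'n" and t
  obtain i j where y: "y = (i, j)" by (cases y)
  have "pc.conv gm fm y t = sw i (\<lambda>a1 b1. sw j (\<lambda>a2 b2.
      \<Sum>p\<in>UNIV. \<Sum>r\<in>UNIV. (\<Sum>q\<in>UNIV. M a1 a2 q * A q p) * M b1 b2 r * M p r t))"
    by (simp add: pc.conv_def swp_def gm_def fm_def y)
  also have "\<dots> = sw i (\<lambda>a1 b1. sw j (\<lambda>a2 b2.
      \<Sum>q\<in>UNIV. \<Sum>r\<in>UNIV. M a1 a2 q * M b1 b2 r * (\<Sum>p\<in>UNIV. A q p * M p r t)))"
    by (simp only: claimB_body)
  also have "\<dots> = (\<Sum>k\<in>UNIV. M i j k * sw k (\<lambda>q r. \<Sum>p\<in>UNIV. A q p * M p r t))"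
    by (rule multsw[symmetric])
  also have "\<dots> = (\<Sum>k\<in>UNIV. E k * M i j k) * U t"
    by (simp add: antL sum_distrib_right sum_distrib_left mult_ac)
  also have "\<dots> = pc.unitc y t" by (simp add: EM pc.unitc_def ECp_def y)
  finally show "pc.conv gm fm y t = pc.unitc y t" .
qed

lemma claimA_body: "(\<Sum>p\<in>UNIV. \<Sum>r\<in>UNIV. M a1 a2 p * (\<Sum>p'\<in>UNIV. \<Sum>r'\<in>UNIV. A b2 p' * A b1 r' * M p' r' r) * M p r t)
  = (\<Sum>q\<in>UNIV. \<Sum>r'\<in>UNIV. \<Sum>k\<in>UNIV. (A b1 r' * M k r' q * M a1 q t) * (\<Sum>p'\<in>UNIV. A b2 p' * M a2 p' k))"
proof -
  have "(\<Sum>p\<in>UNIV. \<Sum>r\<in>UNIV. M a1 a2 p * (\<Sum>p'\<in>UNIV. \<Sum>r'\<in>UNIV. A b2 p' * A b1 r' * M p' r' r) * M p r t)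
     = (\<Sum>r\<in>UNIV. (\<Sum>p'\<in>UNIV. \<Sum>r'\<in>UNIV. A b2 p' * A b1 r' * M p' r' r) * (\<Sum>p\<in>UNIV. M a1 a2 p * M p r t))"
  proof -
    have "(\<Sum>p\<in>UNIV. \<Sum>r\<in>UNIV. M a1 a2 p * (\<Sum>p'\<in>UNIV. \<Sum>r'\<in>UNIV. A b2 p' * A b1 r' * M p' r' r) * M p r t)
      = (\<Sum>p\<in>UNIV. \<Sum>r\<in>UNIV. \<Sum>p'\<in>UNIV. \<Sum>r'\<in>UNIV. M a1 a2 p * (A b2 p' * A b1 r' * M p' r' r) * M p r t)"
      by (simp add: sum_distrib_left sum_distrib_right)
    also have "\<dots> = (\<Sum>r\<in>UNIV. \<Sum>p'\<in>UNIV. \<Sum>r'\<in>UNIV. \<Sum>p\<in>UNIV. M a1 a2 p * (A b2 p' * A b1 r' * M p' r' r) * M p r t)"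
      by (rule sum_rot4)
    also have "\<dots> = (\<Sum>r\<in>UNIV. (\<Sum>p'\<in>UNIV. \<Sum>r'\<in>UNIV. A b2 p' * A b1 r' * M p' r' r) * (\<Sum>p\<in>UNIV. M a1 a2 p * M p r t))"
      by (simp add: sum_distrib_left sum_distrib_right mult_ac)
    finally show ?thesis .
  qed
  also have "\<dots> = (\<Sum>r\<in>UNIV. (\<Sum>p'\<in>UNIV. \<Sum>r'\<in>UNIV. A b2 p' * A b1 r' * M p' r' r) * (\<Sum>q\<in>UNIV. M a2 r q * M a1 q t))"
    by (simp add: MA)
  also have "\<dots> = (\<Sum>q\<in>UNIV. \<Sum>p'\<in>UNIV. \<Sum>r'\<in>UNIV. A b2 p' * A b1 r' * M a1 q t * (\<Sum>r\<in>UNIV. M p' r' r * M a2 r q))"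
  proof -
    have "(\<Sum>r\<in>UNIV. (\<Sum>p'\<in>UNIV. \<Sum>r'\<in>UNIV. A b2 p' * A b1 r' * M p' r' r) * (\<Sum>q\<in>UNIV. M a2 r q * M a1 q t))
       = (\<Sum>r\<in>UNIV. \<Sum>p'\<in>UNIV. \<Sum>r'\<in>UNIV. \<Sum>q\<in>UNIV. A b2 p' * A b1 r' * M a1 q t * (M p' r' r * M a2 r q))"
      by (simp add: sum_distrib_left sum_distrib_right mult_ac)
    also have "\<dots> = (\<Sum>q\<in>UNIV. \<Sum>p'\<in>UNIV. \<Sum>r'\<in>UNIV. \<Sum>r\<in>UNIV. A b2 p' * A b1 r' * M a1 q t * (M p' r' r * M a2 r q))"
      by (rule sum_rot4[symmetric, THEN trans], rule sum.cong[OF refl], rule sum_rot3')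
    also have "\<dots> = (\<Sum>q\<in>UNIV. \<Sum>p'\<in>UNIV. \<Sum>r'\<in>UNIV. A b2 p' * A b1 r' * M a1 q t * (\<Sum>r\<in>UNIV. M p' r' r * M a2 r q))"
      by (simp add: sum_distrib_left)
    finally show ?thesis .
  qed
  also have "\<dots> = (\<Sum>q\<in>UNIV. \<Sum>p'\<in>UNIV. \<Sum>r'\<in>UNIV. A b2 p' * A b1 r' * M a1 q t * (\<Sum>k\<in>UNIV. M a2 p' k * M k r' q))"
    by (simp add: MA)
  also have "\<dots> = (\<Sum>q\<in>UNIV. \<Sum>r'\<in>UNIV. \<Sum>k\<in>UNIV. (A b1 r' * M k r' q * M a1 q t) * (\<Sum>p'\<in>UNIV. A b2 p' * M a2 p' k))"
  proof -
    have "(\<Sum>q\<in>UNIV. \<Sum>p'\<in>UNIV. \<Sum>r'\<in>UNIV. A b2 p' * A b1 r' * M a1 q t * (\<Sum>k\<in>UNIV. M a2 p' k * M k r' q))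
       = (\<Sum>q\<in>UNIV. \<Sum>p'\<in>UNIV. \<Sum>r'\<in>UNIV. \<Sum>k\<in>UNIV. (A b1 r' * M k r' q * M a1 q t) * (A b2 p' * M a2 p' k))"
      by (simp add: sum_distrib_left sum_distrib_right mult_ac)
    also have "\<dots> = (\<Sum>q\<in>UNIV. \<Sum>r'\<in>UNIV. \<Sum>k\<in>UNIV. \<Sum>p'\<in>UNIV. (A b1 r' * M k r' q * M a1 q t) * (A b2 p' * M a2 p' k))"
      by (rule sum.cong[OF refl], rule sum_rot3')
    also have "\<dots> = (\<Sum>q\<in>UNIV. \<Sum>r'\<in>UNIV. \<Sum>k\<in>UNIV. (A b1 r' * M k r' q * M a1 q t) * (\<Sum>p'\<in>UNIV. A b2 p' * M a2 p' k))"
      by (simp add: sum_distrib_left)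
    finally show ?thesis .
  qed
  finally show ?thesis .
qed

lemma claimA: "pc.conv fm hm = pc.unitc"
proof (intro ext)
  fix y :: "'n \<times> 'n" and t
  obtain i j where y: "y = (i, j)" by (cases y)
  have "pc.conv fm hm y t = sw i (\<lambda>a1 b1. sw j (\<lambda>a2 b2.
      \<Sum>p\<in>UNIV. \<Sum>r\<in>UNIV. M a1 a2 p * (\<Sum>p'\<in>UNIV. \<Sum>r'\<in>UNIV. A b2 p' * A b1 r' * M p' r' r) * M p r t))"
    by (simp add: pc.conv_def swp_def hm_def fm_def y)
  also have "\<dots> = sw i (\<lambda>a1 b1. sw j (\<lambda>a2 b2.
      \<Sum>q\<in>UNIV. \<Sum>r'\<in>UNIV. \<Sum>k\<in>UNIV. (A b1 r' * M k r' q * M a1 q t) * (\<Sum>p'\<in>UNIV. A b2 p' * M a2 p' k)))"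
    by (simp only: claimA_body)
  also have "\<dots> = sw i (\<lambda>a1 b1. \<Sum>q\<in>UNIV. \<Sum>r'\<in>UNIV. \<Sum>k\<in>UNIV. (A b1 r' * M k r' q * M a1 q t) * (E j * U k))"
    by (simp only: sw_sum sw_cmult_left antR antR')
  also have "\<dots> = sw i (\<lambda>a1 b1. E j * (\<Sum>q\<in>UNIV. A b1 q * M a1 q t))"
  proof -
    have "(\<Sum>q\<in>UNIV. \<Sum>r'\<in>UNIV. \<Sum>k\<in>UNIV. (A b1 r' * M k r' q * M a1 q t) * (E j * U k))
      = E j * (\<Sum>q\<in>UNIV. \<Sum>r'\<in>UNIV. A b1 r' * M a1 q t * (\<Sum>k\<in>UNIV. U k * M k r' q))" for a1 b1
      by (simp add: sum_distrib_left sum_distrib_right mult_ac)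
    then show ?thesis by (simp add: MU1)
  qed
  also have "\<dots> = E j * (E i * U t)"
    by (simp only: sw_cmult_left sw_sum antR')
  also have "\<dots> = pc.unitc y t" by (simp add: pc.unitc_def ECp_def y mult_ac)
  finally show "pc.conv fm hm y t = pc.unitc y t" .
qed

lemma anti_mult: "(\<Sum>p\<in>UNIV. M i j p * A p k) = (\<Sum>p\<in>UNIV. \<Sum>r\<in>UNIV. A j p * A i r * M p r k)"
proof -
  have "gm = hm" by (rule pc.conv_inv_unique[OF claimB claimA])
  then have "gm (i,j) k = hm (i,j) k" by simp
  then show ?thesis by (simp add: gm_def hm_def)
qed

end


context hidx begin

lemma dual: "hidx (\<lambda>i j k. D k i j) E (\<lambda>k i j. M i j k) U (\<lambda>i j. A j i)"
proof
  show "(\<Sum>k\<in>UNIV. D k i j * D m k l) = (\<Sum>k\<in>UNIV. D k j l * D m i k)" for i j l m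
    using CA[where x=m and a=i and b=j and c=l] by (simp add: mult.commute)
  show "(\<Sum>i\<in>UNIV. E i * D k i j) = (if j = k then 1 else 0)" for j k
    using CU1[where x=k and c=j] by auto
  show "(\<Sum>j\<in>UNIV. E j * D k i j) = (if i = k then 1 else 0)" for i k
    using CU2[where x=k and a=i] by auto
  show "(\<Sum>i\<in>UNIV. M i c x * M a b i) = (\<Sum>j\<in>UNIV. M a j x * M b c j)" for x a b c
    using MA[where i=a and j=b and l=c and m=x] by (simp add: mult.commute)
  show "(\<Sum>i\<in>UNIV. U i * M i c x) = (if x = c then 1 else 0)" for x c
    using MU1[where j=c and k=x] by auto
  show "(\<Sum>j\<in>UNIV. U j * M a j x) = (if x = a then 1 else 0)" for x a
    using MU2[where i=a and k=x] by auto
  show "(\<Sum>k\<in>UNIV. D k i j * M a b k) =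
       (\<Sum>i1\<in>UNIV. \<Sum>j1\<in>UNIV. \<Sum>i2\<in>UNIV. \<Sum>j2\<in>UNIV. M i1 j1 i * M i2 j2 j * D a i1 i2 * D b j1 j2)" for i j a b
  proof -
    have "(\<Sum>k\<in>UNIV. D k i j * M a b k) = (\<Sum>k\<in>UNIV. M a b k * D k i j)" by (simp add: mult.commute)
    also have "\<dots> = (\<Sum>p\<in>UNIV. \<Sum>q\<in>UNIV. \<Sum>r\<in>UNIV. \<Sum>s\<in>UNIV. D a p q * D b r s * M p r i * M q s j)"
      by (rule DM)
    also have "\<dots> = (\<Sum>p\<in>UNIV. \<Sum>r\<in>UNIV. \<Sum>q\<in>UNIV. \<Sum>s\<in>UNIV. D a p q * D b r s * M p r i * M q s j)"
      by (rule sum.cong[OF refl], rule sum.swap)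
    also have "\<dots> = (\<Sum>i1\<in>UNIV. \<Sum>j1\<in>UNIV. \<Sum>i2\<in>UNIV. \<Sum>j2\<in>UNIV. M i1 j1 i * M i2 j2 j * D a i1 i2 * D b j1 j2)"
      by (simp add: mult_ac)
    finally show ?thesis .
  qed
  show "(\<Sum>k\<in>UNIV. E k * M a b k) = E a * E b" for a b by (rule EM)
  show "(\<Sum>k\<in>UNIV. U k * D k i j) = U i * U j" for i j by (rule DU)
  show "(\<Sum>k\<in>UNIV. U k * E k) = 1" using EU by (simp add: mult.commute)
  show "(\<Sum>a\<in>UNIV. \<Sum>b\<in>UNIV. \<Sum>p\<in>UNIV. M a b x * A p a * D k p b) = U x * E k" for x k
  proof -
    have "(\<Sum>a\<in>UNIV. \<Sum>b\<in>UNIV. \<Sum>p\<in>UNIV. M a b x * A p a * D k p b) = (\<Sum>p\<in>UNIV. \<Sum>a\<in>UNIV. \<Sum>b\<in>UNIV. M a b x * A p a * D k p b)"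
      by (rule sum_rot3'[symmetric, THEN trans], rule sum.cong[OF refl], rule refl)
    also have "\<dots> = (\<Sum>p\<in>UNIV. \<Sum>b\<in>UNIV. \<Sum>a\<in>UNIV. M a b x * A p a * D k p b)"
      by (rule sum.cong[OF refl], rule sum.swap)
    also have "\<dots> = E k * U x" using AL[where x=k and k=x] by (simp add: mult_ac)
    finally show ?thesis by (simp add: mult.commute)
  qed
  show "(\<Sum>a\<in>UNIV. \<Sum>b\<in>UNIV. \<Sum>p\<in>UNIV. M a b x * A p b * D k a p) = U x * E k" for x k
  proof -
    have "(\<Sum>a\<in>UNIV. \<Sum>b\<in>UNIV. \<Sum>p\<in>UNIV. M a b x * A p b * D k a p) = (\<Sum>a\<in>UNIV. \<Sum>p\<in>UNIV. \<Sum>b\<in>UNIV. M a b x * A p b * D k a p)"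
      by (rule sum.cong[OF refl], rule sum.swap)
    also have "\<dots> = E k * U x" using AR[where x=k and k=x] by (simp add: mult_ac)
    finally show ?thesis by (simp add: mult.commute)
  qed
qed

lemma anti_comult: "(\<Sum>p\<in>UNIV. A k p * D p i j) = (\<Sum>p\<in>UNIV. \<Sum>r\<in>UNIV. D k p r * A r i * A p j)"
  using hidx.anti_mult[OF dual, where i=i and j=j and k=k] by (simp add: mult_ac)

lemma ant_counit: "(\<Sum>j\<in>UNIV. A i j * E j) = E i"
proof -
  have "(\<Sum>j\<in>UNIV. A i j * E j) = sw i (\<lambda>a b. E a * (\<Sum>p\<in>UNIV. A b p * E p))"
    by (simp add: counitL)
  also have "\<dots> = sw i (\<lambda>a b. \<Sum>p\<in>UNIV. A b p * (\<Sum>k\<in>UNIV. E k * M a p k))"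
    by (simp add: EM mult_ac sum_distrib_left)
  also have "\<dots> = (\<Sum>k\<in>UNIV. E k * sw i (\<lambda>a b. \<Sum>p\<in>UNIV. A b p * M a p k))"
  proof -
    have "sw i (\<lambda>a b. \<Sum>p\<in>UNIV. A b p * (\<Sum>k\<in>UNIV. E k * M a p k)) = sw i (\<lambda>a b. \<Sum>k\<in>UNIV. E k * (\<Sum>p\<in>UNIV. A b p * M a p k))"
      by (rule arg_cong[where f="sw i"], intro ext, simp add: sum_distrib_left mult_ac, rule sum.swap)
    then show ?thesis by (simp only: sw_sum sw_cmult_left)
  qed
  also have "\<dots> = E i * (\<Sum>k\<in>UNIV. E k * U k)" by (simp add: antR sum_distrib_left mult_ac)
  also have "\<dots> = E i" by (simp add: EU)
  finally show ?thesis .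
qed

lemma ant_unit: "(\<Sum>i\<in>UNIV. U i * A i j) = U j"
  using hidx.ant_counit[OF dual, where i=j] by (simp add: mult.commute)

end


context hidx begin

lemma antsw: "(\<Sum>p\<in>UNIV. A u p * sw p F) = sw u (\<lambda>s t. \<Sum>p1\<in>UNIV. \<Sum>p2\<in>UNIV. A t p1 * A s p2 * F p1 p2)"
proof -
  have "(\<Sum>p\<in>UNIV. A u p * sw p F) = (\<Sum>p\<in>UNIV. \<Sum>a\<in>UNIV. \<Sum>b\<in>UNIV. A u p * D p a b * F a b)"
    by (simp add: sw_def sum_distrib_left mult_ac)
  also have "\<dots> = (\<Sum>a\<in>UNIV. \<Sum>b\<in>UNIV. (\<Sum>p\<in>UNIV. A u p * D p a b) * F a b)"
    by (subst sum_rot3', simp add: sum_distrib_right)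
  also have "\<dots> = (\<Sum>a\<in>UNIV. \<Sum>b\<in>UNIV. (\<Sum>p\<in>UNIV. \<Sum>r\<in>UNIV. D u p r * A r a * A p b) * F a b)"
    by (simp only: anti_comult)
  also have "\<dots> = (\<Sum>a\<in>UNIV. \<Sum>b\<in>UNIV. \<Sum>p\<in>UNIV. \<Sum>r\<in>UNIV. D u p r * (A r a * A p b * F a b))"
    by (simp add: sum_distrib_right sum_distrib_left mult_ac)
  also have "\<dots> = (\<Sum>p\<in>UNIV. \<Sum>r\<in>UNIV. \<Sum>a\<in>UNIV. \<Sum>b\<in>UNIV. D u p r * (A r a * A p b * F a b))"
    by (rule sum_swap22)
  also have "\<dots> = sw u (\<lambda>s t. \<Sum>p1\<in>UNIV. \<Sum>p2\<in>UNIV. A t p1 * A s p2 * F p1 p2)"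
    by (simp add: sw_def sum_distrib_left)
  finally show ?thesis .
qed

end

locale hint = hidx +
  fixes mu :: "'a \<Rightarrow> 'b"
  assumes IN: "\<And>x c. (\<Sum>i\<in>UNIV. mu i * D x i c) = mu x * U c"
begin

lemma integral_sw: "sw x (\<lambda>a b. mu a * G b) = mu x * (\<Sum>c\<in>UNIV. U c * G c)"
proof -
  have "sw x (\<lambda>a b. mu a * G b) = (\<Sum>b\<in>UNIV. (\<Sum>a\<in>UNIV. mu a * D x a b) * G b)"
    unfolding sw_def by (subst sum.swap, simp add: sum_distrib_right sum_distrib_left mult_ac)
  also have "\<dots> = mu x * (\<Sum>c\<in>UNIV. U c * G c)" by (simp add: IN sum_distrib_left mult_ac)
  finally show ?thesis .
qed

definition N :: "'a \<Rightarrow> 'a \<Rightarrow> 'b" where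
  "N t w = (\<Sum>p\<in>UNIV. \<Sum>m\<in>UNIV. A t p * M p w m * mu m)"

lemma L3: "sw j (\<lambda>a b. N i a * G b) = sw i (\<lambda>a b. G a * N b j)"
proof -
  define Fa where "Fa a q r = mu q * (\<Sum>k\<in>UNIV. M a r k * G k)" for a q r
  have "sw i (\<lambda>a b. G a * N b j) = sw i (\<lambda>a u. (\<Sum>m\<in>UNIV. (\<Sum>p\<in>UNIV. A u p * M p j m) * mu m) * (\<Sum>c\<in>UNIV. U c * (\<Sum>k\<in>UNIV. M a c k * G k)))"
  proof -
    have g: "G a = (\<Sum>c\<in>UNIV. U c * (\<Sum>k\<in>UNIV. M a c k * G k))" for a
    proof -
      have "(\<Sum>c\<in>UNIV. U c * (\<Sum>k\<in>UNIV. M a c k * G k)) = (\<Sum>k\<in>UNIV. (\<Sum>c\<in>UNIV. U c * M a c k) * G k)"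
        by (simp add: sum_distrib_left sum_distrib_right mult_ac, rule sum.swap)
      then show ?thesis by (simp add: MU2)
    qed
    have n: "N u j = (\<Sum>m\<in>UNIV. (\<Sum>p\<in>UNIV. A u p * M p j m) * mu m)" for u
      by (simp add: N_def sum_distrib_right, rule sum.swap)
    show ?thesis by (simp only: g[symmetric] n[symmetric], simp add: mult.commute)
  qed
  also have "\<dots> = sw i (\<lambda>a u. \<Sum>m\<in>UNIV. (\<Sum>p\<in>UNIV. A u p * M p j m) * sw m (\<lambda>q r. Fa a q r))"
  proof -
    have "(\<Sum>m\<in>UNIV. z m * sw m (\<lambda>q r. Fa a q r)) = (\<Sum>m\<in>UNIV. z m * mu m) * (\<Sum>c\<in>UNIV. U c * (\<Sum>k\<in>UNIV. M a c k * G k))" for z a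
      by (simp add: Fa_def integral_sw sum_distrib_right mult_ac)
    then show ?thesis by simp
  qed
  also have "\<dots> = sw i (\<lambda>a u. \<Sum>p\<in>UNIV. A u p * (\<Sum>m\<in>UNIV. M p j m * sw m (\<lambda>q r. Fa a q r)))"
  proof -
    have "(\<Sum>m\<in>UNIV. (\<Sum>p\<in>UNIV. A u p * M p j m) * X m) = (\<Sum>p\<in>UNIV. A u p * (\<Sum>m\<in>UNIV. M p j m * X m))" for u and X :: "'a \<Rightarrow> 'b"
      by (simp add: sum_distrib_left sum_distrib_right mult_ac, rule sum.swap)
    then show ?thesis by simp
  qed
  also have "\<dots> = sw i (\<lambda>a u. \<Sum>p\<in>UNIV. A u p * sw p (\<lambda>p1 p2. sw j (\<lambda>j1 j2. \<Sum>q\<in>UNIV. \<Sum>r\<in>UNIV. M p1 j1 q * M p2 j2 r * Fa a q r)))"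
    by (simp only: multsw)
  also have "\<dots> = sw i (\<lambda>a u. sw u (\<lambda>s t. \<Sum>p1\<in>UNIV. \<Sum>p2\<in>UNIV. A t p1 * A s p2 * sw j (\<lambda>j1 j2. \<Sum>q\<in>UNIV. \<Sum>r\<in>UNIV. M p1 j1 q * M p2 j2 r * Fa a q r)))"
    by (simp only: antsw)
  also have "\<dots> = sw i (\<lambda>p t. sw p (\<lambda>a s. \<Sum>p1\<in>UNIV. \<Sum>p2\<in>UNIV. A t p1 * A s p2 * sw j (\<lambda>j1 j2. \<Sum>q\<in>UNIV. \<Sum>r\<in>UNIV. M p1 j1 q * M p2 j2 r * Fa a q r)))"
    by (rule coassoc[symmetric])
  also have "\<dots> = sw i (\<lambda>p t. E p * (\<Sum>p1\<in>UNIV. A t p1 * sw j (\<lambda>j1 j2. (\<Sum>q\<in>UNIV. M p1 j1 q * mu q) * G j2)))"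
  proof -
    have "sw p (\<lambda>a s. \<Sum>p1\<in>UNIV. \<Sum>p2\<in>UNIV. A t p1 * A s p2 * sw j (\<lambda>j1 j2. \<Sum>q\<in>UNIV. \<Sum>r\<in>UNIV. M p1 j1 q * M p2 j2 r * Fa a q r))
      = E p * (\<Sum>p1\<in>UNIV. A t p1 * sw j (\<lambda>j1 j2. (\<Sum>q\<in>UNIV. M p1 j1 q * mu q) * G j2))" for p t
    proof -
      have b: "(\<Sum>p1\<in>UNIV. \<Sum>p2\<in>UNIV. A t p1 * A s p2 * sw j (\<lambda>j1 j2. \<Sum>q\<in>UNIV. \<Sum>r\<in>UNIV. M p1 j1 q * M p2 j2 r * Fa a q r))
        = sw j (\<lambda>j1 j2. \<Sum>p1\<in>UNIV. \<Sum>k\<in>UNIV. \<Sum>w\<in>UNIV. (A t p1 * (\<Sum>q\<in>UNIV. M p1 j1 q * mu q) * G k * M w j2 k) * (\<Sum>p2\<in>UNIV. A s p2 * M a p2 w))" for a s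
      proof -
        have e0: "(\<Sum>q\<in>UNIV. \<Sum>r\<in>UNIV. M p1 j1 q * M p2 j2 r * Fa a q r)
           = (\<Sum>q\<in>UNIV. M p1 j1 q * mu q) * (\<Sum>k\<in>UNIV. G k * (\<Sum>r\<in>UNIV. M p2 j2 r * M a r k))" for p1 p2 j1 j2
        proof -
          have "(\<Sum>q\<in>UNIV. \<Sum>r\<in>UNIV. M p1 j1 q * M p2 j2 r * Fa a q r)
            = (\<Sum>q\<in>UNIV. \<Sum>r\<in>UNIV. \<Sum>k\<in>UNIV. (M p1 j1 q * mu q) * (G k * (M p2 j2 r * M a r k)))"
            by (simp add: Fa_def sum_distrib_left mult_ac)
          also have "\<dots> = (\<Sum>r\<in>UNIV. \<Sum>k\<in>UNIV. \<Sum>q\<in>UNIV. (M p1 j1 q * mu q) * (G k * (M p2 j2 r * M a r k)))"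
            by (rule sum_rot3')
          also have "\<dots> = (\<Sum>q\<in>UNIV. M p1 j1 q * mu q) * (\<Sum>r\<in>UNIV. \<Sum>k\<in>UNIV. G k * (M p2 j2 r * M a r k))"
            by (simp add: sum_distrib_left sum_distrib_right mult_ac)
          also have "\<dots> = (\<Sum>q\<in>UNIV. M p1 j1 q * mu q) * (\<Sum>k\<in>UNIV. G k * (\<Sum>r\<in>UNIV. M p2 j2 r * M a r k))"
            by (subst sum.swap, simp add: sum_distrib_left)
          finally show ?thesis .
        qed
        have e1: "(\<Sum>q\<in>UNIV. \<Sum>r\<in>UNIV. M p1 j1 q * M p2 j2 r * Fa a q r)
           = (\<Sum>q\<in>UNIV. M p1 j1 q * mu q) * (\<Sum>k\<in>UNIV. G k * (\<Sum>w\<in>UNIV. M a p2 w * M w j2 k))" for p1 p2 j1 j2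
          by (simp only: e0 MA[symmetric])
        have "(\<Sum>p1\<in>UNIV. \<Sum>p2\<in>UNIV. A t p1 * A s p2 * sw j (\<lambda>j1 j2. \<Sum>q\<in>UNIV. \<Sum>r\<in>UNIV. M p1 j1 q * M p2 j2 r * Fa a q r))
          = (\<Sum>p1\<in>UNIV. \<Sum>p2\<in>UNIV. sw j (\<lambda>j1 j2. A t p1 * A s p2 * ((\<Sum>q\<in>UNIV. M p1 j1 q * mu q) * (\<Sum>k\<in>UNIV. G k * (\<Sum>w\<in>UNIV. M a p2 w * M w j2 k)))))"
          by (simp only: e1 sw_cmult_left)
        also have "\<dots> = sw j (\<lambda>j1 j2. \<Sum>p1\<in>UNIV. \<Sum>p2\<in>UNIV. A t p1 * A s p2 * ((\<Sum>q\<in>UNIV. M p1 j1 q * mu q) * (\<Sum>k\<in>UNIV. G k * (\<Sum>w\<in>UNIV. M a p2 w * M w j2 k))))"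
          by (simp only: sw_sum)
        also have "\<dots> = sw j (\<lambda>j1 j2. \<Sum>p1\<in>UNIV. \<Sum>k\<in>UNIV. \<Sum>w\<in>UNIV. (A t p1 * (\<Sum>q\<in>UNIV. M p1 j1 q * mu q) * G k * M w j2 k) * (\<Sum>p2\<in>UNIV. A s p2 * M a p2 w))"
        proof -
          have "(\<Sum>p2\<in>UNIV. A t p1 * A s p2 * ((\<Sum>q\<in>UNIV. M p1 j1 q * mu q) * (\<Sum>k\<in>UNIV. G k * (\<Sum>w\<in>UNIV. M a p2 w * M w j2 k))))
            = (\<Sum>k\<in>UNIV. \<Sum>w\<in>UNIV. (A t p1 * (\<Sum>q\<in>UNIV. M p1 j1 q * mu q) * G k * M w j2 k) * (\<Sum>p2\<in>UNIV. A s p2 * M a p2 w))" for p1 j1 j2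
          proof -
            have "(\<Sum>p2\<in>UNIV. A t p1 * A s p2 * ((\<Sum>q\<in>UNIV. M p1 j1 q * mu q) * (\<Sum>k\<in>UNIV. G k * (\<Sum>w\<in>UNIV. M a p2 w * M w j2 k))))
              = (\<Sum>p2\<in>UNIV. \<Sum>k\<in>UNIV. \<Sum>w\<in>UNIV. (A t p1 * (\<Sum>q\<in>UNIV. M p1 j1 q * mu q) * G k * M w j2 k) * (A s p2 * M a p2 w))"
              by (simp add: sum_distrib_left sum_distrib_right mult_ac)
            also have "\<dots> = (\<Sum>k\<in>UNIV. \<Sum>w\<in>UNIV. \<Sum>p2\<in>UNIV. (A t p1 * (\<Sum>q\<in>UNIV. M p1 j1 q * mu q) * G k * M w j2 k) * (A s p2 * M a p2 w))"
              by (rule sum_rot3')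
            also have "\<dots> = (\<Sum>k\<in>UNIV. \<Sum>w\<in>UNIV. (A t p1 * (\<Sum>q\<in>UNIV. M p1 j1 q * mu q) * G k * M w j2 k) * (\<Sum>p2\<in>UNIV. A s p2 * M a p2 w))"
              by (simp add: sum_distrib_left)
            finally show ?thesis .
          qed
          then show ?thesis by simp
        qed
        finally show ?thesis .
      qed
      have "sw p (\<lambda>a s. \<Sum>p1\<in>UNIV. \<Sum>p2\<in>UNIV. A t p1 * A s p2 * sw j (\<lambda>j1 j2. \<Sum>q\<in>UNIV. \<Sum>r\<in>UNIV. M p1 j1 q * M p2 j2 r * Fa a q r))
        = sw p (\<lambda>a s. sw j (\<lambda>j1 j2. \<Sum>p1\<in>UNIV. \<Sum>k\<in>UNIV. \<Sum>w\<in>UNIV. (A t p1 * (\<Sum>q\<in>UNIV. M p1 j1 q * mu q) * G k * M w j2 k) * (\<Sum>p2\<in>UNIV. A s p2 * M a p2 w)))"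
        by (simp only: b)
      also have "\<dots> = sw j (\<lambda>j1 j2. sw p (\<lambda>a s. \<Sum>p1\<in>UNIV. \<Sum>k\<in>UNIV. \<Sum>w\<in>UNIV. (A t p1 * (\<Sum>q\<in>UNIV. M p1 j1 q * mu q) * G k * M w j2 k) * (\<Sum>p2\<in>UNIV. A s p2 * M a p2 w)))"
        by (rule sw_fubini)
      also have "\<dots> = sw j (\<lambda>j1 j2. \<Sum>p1\<in>UNIV. \<Sum>k\<in>UNIV. \<Sum>w\<in>UNIV. (A t p1 * (\<Sum>q\<in>UNIV. M p1 j1 q * mu q) * G k * M w j2 k) * (E p * U w))"
        by (simp only: sw_sum sw_cmult_left antR antR')
      also have "\<dots> = sw j (\<lambda>j1 j2. E p * (\<Sum>p1\<in>UNIV. A t p1 * ((\<Sum>q\<in>UNIV. M p1 j1 q * mu q) * G j2)))"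
      proof -
        have gen: "(\<Sum>p1\<in>UNIV. \<Sum>k\<in>UNIV. \<Sum>w\<in>UNIV. (A t p1 * X p1 * G k * M w j2 k) * (E p * U w))
          = E p * (\<Sum>p1\<in>UNIV. \<Sum>k\<in>UNIV. A t p1 * X p1 * G k * (\<Sum>w\<in>UNIV. U w * M w j2 k))" for X j2
          by (simp add: sum_distrib_left sum_distrib_right mult_ac)
        have "(\<Sum>p1\<in>UNIV. \<Sum>k\<in>UNIV. \<Sum>w\<in>UNIV. (A t p1 * (\<Sum>q\<in>UNIV. M p1 j1 q * mu q) * G k * M w j2 k) * (E p * U w))
          = E p * (\<Sum>p1\<in>UNIV. \<Sum>k\<in>UNIV. A t p1 * (\<Sum>q\<in>UNIV. M p1 j1 q * mu q) * G k * (\<Sum>w\<in>UNIV. U w * M w j2 k))" for j1 j2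
          by (rule gen[where X="\<lambda>p1. \<Sum>q\<in>UNIV. M p1 j1 q * mu q"])
        then show ?thesis by (simp add: MU1 mult_ac)
      qed
      also have "\<dots> = E p * (\<Sum>p1\<in>UNIV. A t p1 * sw j (\<lambda>j1 j2. (\<Sum>q\<in>UNIV. M p1 j1 q * mu q) * G j2))"
        by (simp only: sw_cmult_left sw_sum)
      finally show ?thesis .
    qed
    then show ?thesis by simp
  qed
  also have "\<dots> = (\<Sum>p1\<in>UNIV. A i p1 * sw j (\<lambda>j1 j2. (\<Sum>q\<in>UNIV. M p1 j1 q * mu q) * G j2))"
    by (rule counitL)
  also have "\<dots> = sw j (\<lambda>a b. N i a * G b)"
    by (simp add: N_def sw_sum[symmetric] sw_cmult_left[symmetric] sum_distrib_left sum_distrib_right mult_ac)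
  finally show ?thesis ..
qed

end


context hint begin

definition Tm :: "'a \<Rightarrow> 'a \<Rightarrow> 'a \<Rightarrow> 'b" where
  "Tm l v j = (\<Sum>p\<in>UNIV. \<Sum>q\<in>UNIV. A v p * A p q * M q l j)"

definition Lw :: "'a \<Rightarrow> 'a \<Rightarrow> 'a \<Rightarrow> 'b" where
  "Lw l w c = (\<Sum>j\<in>UNIV. sw j (\<lambda>j1 r. (\<Sum>m\<in>UNIV. M w j1 m * mu m) * sw r (\<lambda>j2 j3. Tm l j3 j * (if j2 = c then 1 else 0))))"

lemma inner_id: "(\<Sum>j\<in>UNIV. Tm l h j * N b j) = (\<Sum>s\<in>UNIV. (\<Sum>p\<in>UNIV. A h p * M p b s) * (\<Sum>k\<in>UNIV. A s k * (\<Sum>m\<in>UNIV. M k l m * mu m)))"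
proof -
  have "(\<Sum>j\<in>UNIV. Tm l h j * N b j) = (\<Sum>j\<in>UNIV. \<Sum>p\<in>UNIV. \<Sum>p'\<in>UNIV. \<Sum>q\<in>UNIV. \<Sum>m\<in>UNIV. A h p * A p q * A b p' * mu m * (M q l j * M p' j m))"
    by (simp add: Tm_def N_def sum_distrib_left sum_distrib_right mult_ac)
  also have "\<dots> = (\<Sum>p\<in>UNIV. \<Sum>p'\<in>UNIV. \<Sum>q\<in>UNIV. \<Sum>m\<in>UNIV. \<Sum>j\<in>UNIV. A h p * A p q * A b p' * mu m * (M q l j * M p' j m))"
  proof -
    have "(\<Sum>j\<in>UNIV. \<Sum>p\<in>UNIV. \<Sum>q\<in>UNIV. \<Sum>p'\<in>UNIV. \<Sum>m\<in>UNIV. f j p q p' m) = (\<Sum>p\<in>UNIV. \<Sum>q\<in>UNIV. \<Sum>p'\<in>UNIV. \<Sum>m\<in>UNIV. \<Sum>j\<in>UNIV. f j p q p' m)" for f :: "'a \<Rightarrow> 'a \<Rightarrow> 'a \<Rightarrow> 'a \<Rightarrow> 'a \<Rightarrow> 'b"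
      by (rule sum.swap[THEN trans], rule sum.cong[OF refl], rule sum.swap[THEN trans], rule sum.cong[OF refl], rule sum.swap[THEN trans], rule sum.cong[OF refl], rule sum.swap)
    then show ?thesis .
  qed
  also have "\<dots> = (\<Sum>p\<in>UNIV. \<Sum>p'\<in>UNIV. \<Sum>q\<in>UNIV. \<Sum>m\<in>UNIV. A h p * A p q * A b p' * mu m * (\<Sum>k\<in>UNIV. M p' q k * M k l m))"
    by (simp add: sum_distrib_left MA)
  also have "\<dots> = (\<Sum>p\<in>UNIV. \<Sum>p'\<in>UNIV. \<Sum>q\<in>UNIV. \<Sum>m\<in>UNIV. \<Sum>k\<in>UNIV. (A h p * mu m * M k l m) * (A b p' * A p q * M p' q k))"
    by (simp add: sum_distrib_left mult_ac)
  also have "\<dots> = (\<Sum>p\<in>UNIV. \<Sum>m\<in>UNIV. \<Sum>k\<in>UNIV. \<Sum>p'\<in>UNIV. \<Sum>q\<in>UNIV. (A h p * mu m * M k l m) * (A b p' * A p q * M p' q k))"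
    by (rule sum.cong[OF refl], rule sum_swap22)
  also have "\<dots> = (\<Sum>p\<in>UNIV. \<Sum>m\<in>UNIV. \<Sum>k\<in>UNIV. (A h p * mu m * M k l m) * (\<Sum>p'\<in>UNIV. \<Sum>q\<in>UNIV. A b p' * A p q * M p' q k))"
    by (simp add: sum_distrib_left)
  also have "\<dots> = (\<Sum>p\<in>UNIV. \<Sum>m\<in>UNIV. \<Sum>k\<in>UNIV. (A h p * mu m * M k l m) * (\<Sum>s\<in>UNIV. M p b s * A s k))"
    by (simp only: anti_mult)
  also have "\<dots> = (\<Sum>s\<in>UNIV. (\<Sum>p\<in>UNIV. A h p * M p b s) * (\<Sum>k\<in>UNIV. A s k * (\<Sum>m\<in>UNIV. M k l m * mu m)))"
  proof -
    have "(\<Sum>p\<in>UNIV. \<Sum>m\<in>UNIV. \<Sum>k\<in>UNIV. (A h p * mu m * M k l m) * (\<Sum>s\<in>UNIV. M p b s * A s k))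
      = (\<Sum>p\<in>UNIV. \<Sum>m\<in>UNIV. \<Sum>k\<in>UNIV. \<Sum>s\<in>UNIV. (A h p * M p b s) * (A s k * (M k l m * mu m)))"
      by (simp add: sum_distrib_left mult_ac)
    also have "\<dots> = (\<Sum>s\<in>UNIV. \<Sum>p\<in>UNIV. \<Sum>k\<in>UNIV. \<Sum>m\<in>UNIV. (A h p * M p b s) * (A s k * (M k l m * mu m)))"
    proof -
      have "(\<Sum>p\<in>UNIV. \<Sum>m\<in>UNIV. \<Sum>k\<in>UNIV. \<Sum>s\<in>UNIV. f p m k s) = (\<Sum>s\<in>UNIV. \<Sum>p\<in>UNIV. \<Sum>k\<in>UNIV. \<Sum>m\<in>UNIV. f p m k s)" for f :: "'a \<Rightarrow> 'a \<Rightarrow> 'a \<Rightarrow> 'a \<Rightarrow> 'b"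
      proof -
        have "(\<Sum>p\<in>UNIV. \<Sum>m\<in>UNIV. \<Sum>k\<in>UNIV. \<Sum>s\<in>UNIV. f p m k s) = (\<Sum>p\<in>UNIV. \<Sum>s\<in>UNIV. \<Sum>k\<in>UNIV. \<Sum>m\<in>UNIV. f p m k s)"
          by (rule sum.cong[OF refl], rule sum_rot3'[THEN trans], rule sum.swap)
        also have "\<dots> = (\<Sum>s\<in>UNIV. \<Sum>p\<in>UNIV. \<Sum>k\<in>UNIV. \<Sum>m\<in>UNIV. f p m k s)" by (rule sum.swap)
        finally show ?thesis .
      qed
      then show ?thesis by simp
    qed
    also have "\<dots> = (\<Sum>s\<in>UNIV. (\<Sum>p\<in>UNIV. A h p * M p b s) * (\<Sum>k\<in>UNIV. A s k * (\<Sum>m\<in>UNIV. M k l m * mu m)))"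
      by (rule sum.cong[OF refl], simp add: sum_distrib_left sum_distrib_right, rule sum_rot3')
    finally show ?thesis .
  qed
  finally show ?thesis .
qed

lemma inner_sw: "sw r (\<lambda>h b. \<Sum>j\<in>UNIV. Tm l h j * N b j) = E r * mu l"
proof -
  have "sw r (\<lambda>h b. \<Sum>j\<in>UNIV. Tm l h j * N b j) = (\<Sum>s\<in>UNIV. \<Sum>p\<in>UNIV. sw r (\<lambda>h b. A h p * M p b s) * (\<Sum>k\<in>UNIV. A s k * (\<Sum>m\<in>UNIV. M k l m * mu m)))"
    by (simp only: inner_id sw_sum sw_cmult_right sum_distrib_right)
  also have "\<dots> = (\<Sum>s\<in>UNIV. (E r * U s) * (\<Sum>k\<in>UNIV. A s k * (\<Sum>m\<in>UNIV. M k l m * mu m)))"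
    by (simp only: antL' flip: sum_distrib_right)
  also have "\<dots> = E r * (\<Sum>m\<in>UNIV. (\<Sum>k\<in>UNIV. (\<Sum>s\<in>UNIV. U s * A s k) * M k l m) * mu m)"
  proof -
    have "(\<Sum>s\<in>UNIV. (E r * U s) * (\<Sum>k\<in>UNIV. A s k * (\<Sum>m\<in>UNIV. M k l m * mu m)))
       = E r * (\<Sum>s\<in>UNIV. \<Sum>k\<in>UNIV. \<Sum>m\<in>UNIV. U s * A s k * M k l m * mu m)"
      by (simp add: sum_distrib_left mult_ac)
    also have "\<dots> = E r * (\<Sum>m\<in>UNIV. \<Sum>k\<in>UNIV. \<Sum>s\<in>UNIV. U s * A s k * M k l m * mu m)"
      by (subst sum_rot3, subst sum.swap, rule refl)
    also have "\<dots> = E r * (\<Sum>m\<in>UNIV. (\<Sum>k\<in>UNIV. (\<Sum>s\<in>UNIV. U s * A s k) * M k l m) * mu m)"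
      by (simp add: sum_distrib_right)
    finally show ?thesis .
  qed
  also have "\<dots> = E r * mu l" by (simp add: ant_unit MU1)
  finally show ?thesis .
qed

lemma left_inv: "(\<Sum>w\<in>UNIV. A i w * Lw l w c) = mu l * (if i = c then 1 else 0)"
proof -
  have "(\<Sum>w\<in>UNIV. A i w * Lw l w c) = (\<Sum>j\<in>UNIV. sw j (\<lambda>j1 r. N i j1 * sw r (\<lambda>j2 j3. Tm l j3 j * (if j2 = c then 1 else 0))))"
  proof -
    have "(\<Sum>w\<in>UNIV. A i w * Lw l w c) = (\<Sum>j\<in>UNIV. sw j (\<lambda>j1 r. (\<Sum>w\<in>UNIV. A i w * (\<Sum>m\<in>UNIV. M w j1 m * mu m)) * sw r (\<lambda>j2 j3. Tm l j3 j * (if j2 = c then 1 else 0))))"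
      unfolding Lw_def by (simp only: sum_distrib_left sum_distrib_right sw_sum sw_cmult_left sw_cmult_right mult.assoc, rule sum.swap)
    then show ?thesis by (simp add: N_def sum_distrib_left mult_ac)
  qed
  also have "\<dots> = (\<Sum>j\<in>UNIV. sw i (\<lambda>a b. sw a (\<lambda>j2 j3. Tm l j3 j * (if j2 = c then 1 else 0)) * N b j))"
    by (simp only: L3)
  also have "\<dots> = sw i (\<lambda>a b. sw a (\<lambda>h1 h2. \<Sum>j\<in>UNIV. N b j * (Tm l h2 j * (if h1 = c then 1 else 0))))"
    by (simp only: sw_sum[symmetric] sw_cmult_left[symmetric] mult.commute[of _ "N _ _"])
  also have "\<dots> = sw i (\<lambda>h1 r. sw r (\<lambda>h2 b. \<Sum>j\<in>UNIV. N b j * (Tm l h2 j * (if h1 = c then 1 else 0))))"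
    by (rule coassoc)
  also have "\<dots> = sw i (\<lambda>h1 r. (if h1 = c then 1 else 0) * (E r * mu l))"
  proof -
    have "sw r (\<lambda>h2 b. \<Sum>j\<in>UNIV. N b j * (Tm l h2 j * (if h1 = c then 1 else 0)))
      = (if h1 = c then 1 else 0) * sw r (\<lambda>h2 b. \<Sum>j\<in>UNIV. Tm l h2 j * N b j)" for h1 r
      by (cases "h1 = c") (simp_all add: mult.commute sw_def)
    then show ?thesis by (simp only: inner_sw)
  qed
  also have "\<dots> = sw i (\<lambda>h1 r. E r * ((if h1 = c then 1 else 0) * mu l))"
    by (rule arg_cong[where f="sw i"], rule ext, rule ext, rule mult.left_commute)
  also have "\<dots> = mu l * (if i = c then 1 else 0)"
    by (simp only: counitR, simp)
  finally show ?thesis .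
qed

end


context hidx begin
lemma pull_sw: "sw y (\<lambda>p q. \<Sum>i\<in>UNIV. c i * sw i (F p q)) = (\<Sum>i\<in>UNIV. c i * sw i (\<lambda>a b. sw y (\<lambda>p q. F p q a b)))"
  by (subst sw_sum, subst sw_cmult_left, subst sw_fubini, rule refl)
end

context hint begin

lemma left_inverse_exists:
  assumes "mu \<noteq> (\<lambda>_. 0)"
  shows "\<exists>L. \<forall>i c. (\<Sum>w\<in>UNIV. A i w * L w c) = (if i = c then 1 else 0)"
proof -
  obtain l where l: "mu l \<noteq> 0" using assms by auto
  define L where "L w c = Lw l w c / mu l" for w c
  have "(\<Sum>w\<in>UNIV. A i w * L w c) = (if i = c then 1 else 0)" for i c
  proof -
    have "(\<Sum>w\<in>UNIV. A i w * L w c) = (\<Sum>w\<in>UNIV. A i w * Lw l w c) / mu l"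
      by (simp add: L_def sum_divide_distrib)
    also have "\<dots> = (if i = c then 1 else 0)" using l by (simp add: left_inv)
    finally show ?thesis .
  qed
  then show ?thesis by blast
qed

end

locale hco = hint +
  fixes e :: "'a \<Rightarrow> 'b"
  assumes CO: "\<And>j k. (\<Sum>i\<in>UNIV. e i * M i j k) = E j * e k"
    and NORM: "(\<Sum>i\<in>UNIV. mu i * e i) = 1"
begin

lemma dual_hint: "hint (\<lambda>i j k. D k i j) E (\<lambda>k i j. M i j k) U (\<lambda>i j. A j i) e"
proof -
  interpret d: hidx "\<lambda>i j k. D k i j" E "\<lambda>k i j. M i j k" U "\<lambda>i j. A j i" by (rule dual)
  show ?thesis
    by unfold_locales (simp add: CO mult.commute)
qed

lemma two_sided_inverse:
  assumes "mu \<noteq> (\<lambda>_. 0)" and "e \<noteq> (\<lambda>_. 0)"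
  shows "\<exists>L. (\<forall>i c. (\<Sum>w\<in>UNIV. A i w * L w c) = (if i = c then 1 else 0)) \<and>
             (\<forall>i c. (\<Sum>w\<in>UNIV. L i w * A w c) = (if i = c then 1 else 0))"
proof -
  obtain L where L: "\<And>i c. (\<Sum>w\<in>UNIV. A i w * L w c) = (if i = c then 1 else 0)"
    using left_inverse_exists[OF assms(1)] by blast
  obtain L' where L': "\<And>i c. (\<Sum>w\<in>UNIV. A w i * L' w c) = (if i = c then 1 else 0)"
    using hint.left_inverse_exists[OF dual_hint assms(2)] by blast
  have eq: "L c j = L' j c" for c j
  proof -
    have "L c j = (\<Sum>i\<in>UNIV. (if c = i then 1 else 0) * L i j)" by simp
    also have "\<dots> = (\<Sum>i\<in>UNIV. (\<Sum>w\<in>UNIV. A w i * L' w c) * L i j)"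
      by (simp only: L' eq_commute[of c])
    also have "\<dots> = (\<Sum>w\<in>UNIV. L' w c * (\<Sum>i\<in>UNIV. A w i * L i j))"
      by (simp add: sum_distrib_left sum_distrib_right mult_ac, rule sum.swap)
    also have "\<dots> = L' j c" by (simp add: L)
    finally show ?thesis .
  qed
  have "(\<Sum>w\<in>UNIV. L i w * A w c) = (if i = c then 1 else 0)" for i c
    using L'[of c i] by (simp add: eq mult.commute eq_commute)
  with L show ?thesis by blast
qed

lemma F1: "(\<Sum>i\<in>UNIV. e i * sw i (\<lambda>a b. (\<Sum>m\<in>UNIV. M a y m * mu m) * (if b = c then 1 else 0))) = A y c"
proof -
  have ep: "E p = (\<Sum>m\<in>UNIV. (\<Sum>i\<in>UNIV. e i * M i p m) * mu m)" for p
  proof -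
    have norm': "(\<Sum>m\<in>UNIV. e m * mu m) = 1" using NORM by (simp add: mult.commute)
    show ?thesis by (simp only: CO mult.assoc sum_distrib_left[symmetric] norm' mult_1_right)
  qed
  have aq: "A q c = (\<Sum>c'\<in>UNIV. U c' * (\<Sum>r\<in>UNIV. M c' r c * A q r))" for q
  proof -
    have "(\<Sum>c'\<in>UNIV. U c' * (\<Sum>r\<in>UNIV. M c' r c * A q r)) = (\<Sum>r\<in>UNIV. (\<Sum>c'\<in>UNIV. U c' * M c' r c) * A q r)"
      by (simp add: sum_distrib_left sum_distrib_right mult_ac, rule sum.swap)
    then show ?thesis by (simp add: MU1)
  qed
  have "A y c = sw y (\<lambda>p q. E p * A q c)" by (simp add: counitL)
  also have "\<dots> = sw y (\<lambda>p q. (\<Sum>m\<in>UNIV. (\<Sum>i\<in>UNIV. e i * M i p m) * mu m) * (\<Sum>c'\<in>UNIV. U c' * (\<Sum>r\<in>UNIV. M c' r c * A q r)))"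
    by (simp only: ep[symmetric] aq[symmetric])
  also have "\<dots> = sw y (\<lambda>p q. \<Sum>m\<in>UNIV. (\<Sum>i\<in>UNIV. e i * M i p m) * sw m (\<lambda>a b. mu a * (\<Sum>r\<in>UNIV. M b r c * A q r)))"
  proof -
    have "(\<Sum>m\<in>UNIV. z m * sw m (\<lambda>a b. mu a * (\<Sum>r\<in>UNIV. M b r c * A q r)))
       = (\<Sum>m\<in>UNIV. z m * mu m) * (\<Sum>c'\<in>UNIV. U c' * (\<Sum>r\<in>UNIV. M c' r c * A q r))" for z q
      by (simp add: integral_sw sum_distrib_right mult_ac)
    then show ?thesis by simp
  qed
  also have "\<dots> = sw y (\<lambda>p q. \<Sum>i\<in>UNIV. e i * (\<Sum>m\<in>UNIV. M i p m * sw m (\<lambda>a b. mu a * (\<Sum>r\<in>UNIV. M b r c * A q r))))"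
  proof -
    have "(\<Sum>m\<in>UNIV. (\<Sum>i\<in>UNIV. e i * M i p m) * X m) = (\<Sum>i\<in>UNIV. e i * (\<Sum>m\<in>UNIV. M i p m * X m))" for p and X :: "'a \<Rightarrow> 'b"
      by (simp add: sum_distrib_left sum_distrib_right mult_ac, rule sum.swap)
    then show ?thesis by simp
  qed
  also have "\<dots> = sw y (\<lambda>p q. \<Sum>i\<in>UNIV. e i * sw i (\<lambda>al be. sw p (\<lambda>ga de. \<Sum>u\<in>UNIV. \<Sum>v\<in>UNIV. M al ga u * M be de v * (mu u * (\<Sum>r\<in>UNIV. M v r c * A q r)))))"
    by (simp only: multsw)
  also have "\<dots> = (\<Sum>i\<in>UNIV. e i * sw i (\<lambda>al be. sw y (\<lambda>p q. sw p (\<lambda>ga de. \<Sum>u\<in>UNIV. \<Sum>v\<in>UNIV. M al ga u * M be de v * (mu u * (\<Sum>r\<in>UNIV. M v r c * A q r))))))"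
    by (rule pull_sw)
  also have "\<dots> = (\<Sum>i\<in>UNIV. e i * sw i (\<lambda>al be. sw y (\<lambda>ga j'. sw j' (\<lambda>de q. \<Sum>u\<in>UNIV. \<Sum>v\<in>UNIV. M al ga u * M be de v * (mu u * (\<Sum>r\<in>UNIV. M v r c * A q r))))))"
    by (simp only: coassoc)
  also have "\<dots> = (\<Sum>i\<in>UNIV. e i * sw i (\<lambda>al be. sw y (\<lambda>ga j'. E j' * ((\<Sum>u\<in>UNIV. M al ga u * mu u) * (if be = c then 1 else 0)))))"
  proof -
    have "sw j' (\<lambda>de q. \<Sum>u\<in>UNIV. \<Sum>v\<in>UNIV. M al ga u * M be de v * (mu u * (\<Sum>r\<in>UNIV. M v r c * A q r)))
      = E j' * ((\<Sum>u\<in>UNIV. M al ga u * mu u) * (if be = c then 1 else 0))" for al be ga j'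
    proof -
      have x: "(\<Sum>u\<in>UNIV. \<Sum>v\<in>UNIV. M al ga u * M be de v * (mu u * (\<Sum>r\<in>UNIV. M v r c * A q r)))
        = (\<Sum>u\<in>UNIV. M al ga u * mu u) * (\<Sum>k\<in>UNIV. M be k c * (\<Sum>r\<in>UNIV. A q r * M de r k))" for de q
      proof -
        have "(\<Sum>u\<in>UNIV. \<Sum>v\<in>UNIV. M al ga u * M be de v * (mu u * (\<Sum>r\<in>UNIV. M v r c * A q r)))
          = (\<Sum>u\<in>UNIV. M al ga u * mu u) * (\<Sum>v\<in>UNIV. M be de v * (\<Sum>r\<in>UNIV. M v r c * A q r))"
          by (rule fac2)
        also have "\<dots> = (\<Sum>u\<in>UNIV. M al ga u * mu u) * (\<Sum>r\<in>UNIV. A q r * (\<Sum>v\<in>UNIV. M be de v * M v r c))"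
          by (subst swapfac, rule refl)
        also have "\<dots> = (\<Sum>u\<in>UNIV. M al ga u * mu u) * (\<Sum>r\<in>UNIV. A q r * (\<Sum>k\<in>UNIV. M de r k * M be k c))"
          by (simp only: MA)
        also have "\<dots> = (\<Sum>u\<in>UNIV. M al ga u * mu u) * (\<Sum>k\<in>UNIV. M be k c * (\<Sum>r\<in>UNIV. A q r * M de r k))"
          by (subst swapfac, rule refl)
        finally show ?thesis .
      qed
      have mu2: "(\<Sum>k\<in>UNIV. M be k c * (E j' * U k)) = E j' * (if be = c then 1 else 0)"
      proof -
        have "(\<Sum>k\<in>UNIV. M be k c * (E j' * U k)) = E j' * (\<Sum>k\<in>UNIV. U k * M be k c)"
          by (simp add: sum_distrib_left mult_ac)
        then show ?thesis by (simp only: MU2)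
      qed
      show ?thesis by (simp only: x sw_cmult_left sw_sum antR antR' mu2, simp add: mult_ac)
    qed
    then show ?thesis by simp
  qed
  also have "\<dots> = (\<Sum>i\<in>UNIV. e i * sw i (\<lambda>al be. (\<Sum>u\<in>UNIV. M al y u * mu u) * (if be = c then 1 else 0)))"
    by (simp only: counitR)
  finally show ?thesis by (simp add: mult_ac)
qed

end


lemma g1: "(\<Sum>j\<in>UNIV. (\<Sum>w\<in>UNIV. P w * Q w j) * (\<Sum>c\<in>UNIV. R j c * (\<Sum>y\<in>UNIV. S y * T y c)))
  = (\<Sum>w\<in>UNIV. P w * (\<Sum>y\<in>UNIV. S y * (\<Sum>j\<in>UNIV. \<Sum>c\<in>UNIV. Q w j * T y c * (R j c::'k::comm_ring_1))))"
  by (simp add: sum_distrib_left sum_distrib_right mult_ac, rule sum_swap22[THEN trans], rule sum.swap)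

lemma g2: "(\<Sum>c\<in>UNIV. S c * (\<Sum>i\<in>UNIV. P i * (\<Sum>a\<in>UNIV. Q i a * (\<Sum>m\<in>UNIV. R a c m * W m)))) = (\<Sum>i\<in>UNIV. P i * (\<Sum>a\<in>UNIV. Q i a * (\<Sum>m\<in>UNIV. (\<Sum>c\<in>UNIV. R a c m * S c) * (W m::'k::comm_ring_1))))"
  by (simp add: sum_distrib_left sum_distrib_right mult_ac, rule sum_rot4)

locale hinv = hco +
  fixes L :: "'a \<Rightarrow> 'a \<Rightarrow> 'b"
  assumes LR: "\<And>i c. (\<Sum>w\<in>UNIV. A i w * L w c) = (if i = c then 1 else 0)"
    and LL: "\<And>i c. (\<Sum>w\<in>UNIV. L i w * A w c) = (if i = c then 1 else 0)"
begin

definition s :: "'a \<Rightarrow> 'b" where "s m = (\<Sum>y\<in>UNIV. e y * A y m)"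

lemma left_coint: "(\<Sum>c\<in>UNIV. M a c m * s c) = E a * s m"
proof -
  have "(\<Sum>c\<in>UNIV. M a c m * s c) = (\<Sum>j\<in>UNIV. (\<Sum>w\<in>UNIV. L a w * A w j) * (\<Sum>c\<in>UNIV. M j c m * (\<Sum>y\<in>UNIV. e y * A y c)))"
    by (simp add: LL s_def)
  also have "\<dots> = (\<Sum>w\<in>UNIV. L a w * (\<Sum>y\<in>UNIV. e y * (\<Sum>j\<in>UNIV. \<Sum>c\<in>UNIV. A w j * A y c * M j c m)))"
    by (rule g1)
  also have "\<dots> = (\<Sum>w\<in>UNIV. L a w * (\<Sum>y\<in>UNIV. e y * (\<Sum>p\<in>UNIV. M y w p * A p m)))"
    by (simp only: anti_mult)
  also have "\<dots> = (\<Sum>w\<in>UNIV. L a w * (\<Sum>p\<in>UNIV. (\<Sum>y\<in>UNIV. e y * M y w p) * A p m))"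
  proof -
    have "(\<Sum>y\<in>UNIV. e y * (\<Sum>p\<in>UNIV. M y w p * A p m)) = (\<Sum>p\<in>UNIV. (\<Sum>y\<in>UNIV. e y * M y w p) * A p m)" for w
      by (simp add: sum_distrib_left sum_distrib_right mult_ac, rule sum.swap)
    then show ?thesis by simp
  qed
  also have "\<dots> = (\<Sum>w\<in>UNIV. L a w * E w) * s m"
    by (simp add: CO s_def sum_distrib_left sum_distrib_right mult_ac, rule sum.swap)
  also have "(\<Sum>w\<in>UNIV. L a w * E w) = E a"
  proof -
    have "(\<Sum>w\<in>UNIV. L a w * E w) = (\<Sum>w\<in>UNIV. L a w * (\<Sum>j\<in>UNIV. A w j * E j))"
      by (simp add: ant_counit)
    also have "\<dots> = (\<Sum>j\<in>UNIV. (\<Sum>w\<in>UNIV. L a w * A w j) * E j)"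
      by (simp add: sum_distrib_left sum_distrib_right mult_ac, rule sum.swap)
    also have "\<dots> = E a" by (simp add: LL)
    finally show ?thesis .
  qed
  finally show ?thesis .
qed

lemma F1': "A y c = (\<Sum>i\<in>UNIV. e i * (\<Sum>a\<in>UNIV. D i a c * (\<Sum>m\<in>UNIV. M a y m * mu m)))"
proof -
  have "A y c = (\<Sum>i\<in>UNIV. e i * sw i (\<lambda>a b. (\<Sum>m\<in>UNIV. M a y m * mu m) * (if b = c then 1 else 0)))"
    by (rule F1[symmetric])
  also have "\<dots> = (\<Sum>i\<in>UNIV. e i * (\<Sum>a\<in>UNIV. D i a c * (\<Sum>m\<in>UNIV. M a y m * mu m)))"
    by (simp add: sw_def mult_ac)
  finally show ?thesis .
qed

lemma claim1: "(\<Sum>c\<in>UNIV. s c * A c d) = e d * (\<Sum>m\<in>UNIV. s m * mu m)"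
proof -
  have "(\<Sum>c\<in>UNIV. s c * A c d) = (\<Sum>c\<in>UNIV. s c * (\<Sum>i\<in>UNIV. e i * (\<Sum>a\<in>UNIV. D i a d * (\<Sum>m\<in>UNIV. M a c m * mu m))))"
    by (simp only: F1'[symmetric])
  also have "\<dots> = (\<Sum>i\<in>UNIV. e i * (\<Sum>a\<in>UNIV. D i a d * (\<Sum>m\<in>UNIV. (\<Sum>c\<in>UNIV. M a c m * s c) * mu m)))"
    by (rule g2)
  also have "\<dots> = (\<Sum>i\<in>UNIV. e i * (\<Sum>a\<in>UNIV. E a * D i a d)) * (\<Sum>m\<in>UNIV. s m * mu m)"
  proof -
    define K where "K = (\<Sum>m\<in>UNIV. s m * mu m)"
    have k: "(\<Sum>m\<in>UNIV. (E a * s m) * mu m) = E a * K" for a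
      by (simp add: K_def sum_distrib_left mult_ac)
    have "(\<Sum>i\<in>UNIV. e i * (\<Sum>a\<in>UNIV. D i a d * (\<Sum>m\<in>UNIV. (\<Sum>c\<in>UNIV. M a c m * s c) * mu m)))
       = (\<Sum>i\<in>UNIV. e i * (\<Sum>a\<in>UNIV. D i a d * (E a * K)))"
      by (simp only: left_coint k)
    also have "\<dots> = (\<Sum>i\<in>UNIV. e i * (\<Sum>a\<in>UNIV. E a * D i a d)) * K"
      by (simp add: sum_distrib_left sum_distrib_right mult_ac)
    finally show ?thesis by (simp only: K_def)
  qed
  also have "\<dots> = e d * (\<Sum>m\<in>UNIV. s m * mu m)"
    by (simp add: CU1)
  finally show ?thesis .
qed

end


definition bv :: "'n \<Rightarrow> 'n \<Rightarrow> 'k::comm_ring_1" where "bv i = (\<lambda>j. if j = i then 1 else 0)"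

lemma sum_if_out[simp]: "(\<Sum>j\<in>A. if P then f j else 0) = (if P then sum f A else (0::'k::comm_ring_1))"
  by auto

lemma mul_bv: "mul M (bv i) (bv j) = (\<lambda>k. M i j k)"
  by (simp add: mul_def bv_def)
lemma cop_bv: "cop D (bv x) = (\<lambda>(a, b). D x a b)"
  by (auto simp: cop_def bv_def)

lemma hopf_idx:
  fixes M :: "'n::finite \<Rightarrow> 'n \<Rightarrow> 'n \<Rightarrow> 'k::field"
  assumes "hopf_algebra M U D E A"
  shows "hidx M U D E A"
proof -
  note h = assms[unfolded hopf_algebra_def]
  show ?thesis
  proof
    show "(\<Sum>k\<in>UNIV. M i j k * M k l m) = (\<Sum>k\<in>UNIV. M j l k * M i k m)" for i j l m
      using fun_cong[OF h[THEN conjunct1, rule_format, of "bv i" "bv j" "bv l"], of m]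
      by (simp add: mul_bv) (simp add: mul_def bv_def mult.commute sum_if_out)
    show "(\<Sum>i\<in>UNIV. U i * M i j k) = (if j = k then 1 else 0)" for j k
      using fun_cong[OF h[THEN conjunct2, THEN conjunct1, rule_format, of "bv j"], of k]
      by (simp add: mul_def bv_def eq_commute)
    show "(\<Sum>j\<in>UNIV. U j * M i j k) = (if i = k then 1 else 0)" for i k
      using fun_cong[OF h[THEN conjunct2, THEN conjunct2, THEN conjunct1, rule_format, of "bv i"], of k]
      by (simp add: mul_def bv_def eq_commute mult.commute)
    show "(\<Sum>i\<in>UNIV. D x i c * D i a b) = (\<Sum>j\<in>UNIV. D x a j * D j b c)" for x a b c
      using fun_cong[OF h[THEN conjunct2, THEN conjunct2, THEN conjunct2, THEN conjunct1, rule_format, of "bv x"], of "(a,b,c)"]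
      by (simp add: cop_left_def cop_right_def cop_bv)
    show "(\<Sum>i\<in>UNIV. E i * D x i c) = (if x = c then 1 else 0)" for x c
      using fun_cong[OF h[THEN conjunct2, THEN conjunct2, THEN conjunct2, THEN conjunct2, THEN conjunct1, rule_format, of "bv x"], of c]
      by (simp add: cou_left_def cop_bv) (simp add: bv_def eq_commute)
    show "(\<Sum>j\<in>UNIV. E j * D x a j) = (if x = a then 1 else 0)" for x a
      using fun_cong[OF h[THEN conjunct2, THEN conjunct2, THEN conjunct2, THEN conjunct2, THEN conjunct2, THEN conjunct1, rule_format, of "bv x"], of a]
      by (simp add: cou_right_def cop_bv) (simp add: bv_def eq_commute)
    show "(\<Sum>k\<in>UNIV. M i j k * D k a b) =
       (\<Sum>i1\<in>UNIV. \<Sum>j1\<in>UNIV. \<Sum>i2\<in>UNIV. \<Sum>j2\<in>UNIV. D i i1 j1 * D j i2 j2 * M i1 i2 a * M j1 j2 b)" for i j a b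
      using fun_cong[OF h[THEN conjunct2, THEN conjunct2, THEN conjunct2, THEN conjunct2, THEN conjunct2, THEN conjunct2, THEN conjunct1, rule_format, of "bv i" "bv j"], of "(a,b)"]
      by (simp add: mul_bv tmul_def cop_bv) (simp add: cop_def mult.commute)
    show "(\<Sum>k\<in>UNIV. U k * D k a b) = U a * U b" for a b
      using fun_cong[OF h[THEN conjunct2, THEN conjunct2, THEN conjunct2, THEN conjunct2, THEN conjunct2, THEN conjunct2, THEN conjunct2, THEN conjunct1], of "(a,b)"]
      by (simp add: cop_def tunit_def)
    show "(\<Sum>k\<in>UNIV. E k * M i j k) = E i * E j" for i j
      using h[THEN conjunct2, THEN conjunct2, THEN conjunct2, THEN conjunct2, THEN conjunct2, THEN conjunct2, THEN conjunct2, THEN conjunct2, THEN conjunct1, rule_format, of "bv i" "bv j"]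
      by (simp add: mul_bv cou_def) (simp add: bv_def)
    show "(\<Sum>k\<in>UNIV. E k * U k) = 1"
      using h[THEN conjunct2, THEN conjunct2, THEN conjunct2, THEN conjunct2, THEN conjunct2, THEN conjunct2, THEN conjunct2, THEN conjunct2, THEN conjunct2, THEN conjunct1]
      by (simp add: cou_def)
    show "(\<Sum>a\<in>UNIV. \<Sum>b\<in>UNIV. \<Sum>p\<in>UNIV. D x a b * A a p * M p b k) = E x * U k" for x k
      using fun_cong[OF h[THEN conjunct2, THEN conjunct2, THEN conjunct2, THEN conjunct2, THEN conjunct2, THEN conjunct2, THEN conjunct2, THEN conjunct2, THEN conjunct2, THEN conjunct2, THEN conjunct1, rule_format, of "bv x"], of k]
      by (simp add: ant_left_def cop_bv smul_def cou_def) (simp add: bv_def)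
    show "(\<Sum>a\<in>UNIV. \<Sum>b\<in>UNIV. \<Sum>p\<in>UNIV. D x a b * A b p * M a p k) = E x * U k" for x k
      using fun_cong[OF h[THEN conjunct2, THEN conjunct2, THEN conjunct2, THEN conjunct2, THEN conjunct2, THEN conjunct2, THEN conjunct2, THEN conjunct2, THEN conjunct2, THEN conjunct2, THEN conjunct2, rule_format, of "bv x"], of k]
      by (simp add: ant_right_def cop_bv smul_def cou_def) (simp add: bv_def)
  qed
qed


lemma sum_rot5r: "(\<Sum>a\<in>P. \<Sum>b\<in>Q. \<Sum>c\<in>R. \<Sum>d\<in>S. \<Sum>e\<in>T. f a b c d e) = (\<Sum>e\<in>T. \<Sum>a\<in>P. \<Sum>b\<in>Q. \<Sum>c\<in>R. \<Sum>d\<in>S. f a b c d e)"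
  by (rule sum.cong[OF refl, THEN trans], rule sum_rot4[symmetric], rule sum.swap)
lemma g3: "(\<Sum>m\<in>UNIV. (\<Sum>y\<in>UNIV. P y * (\<Sum>i\<in>UNIV. P i * (\<Sum>a\<in>UNIV. Q i a m * (\<Sum>m'\<in>UNIV. R a y m' * W m')))) * W m)
  = (\<Sum>m'\<in>UNIV. W m' * (\<Sum>a\<in>UNIV. \<Sum>y\<in>UNIV. (\<Sum>k\<in>UNIV. (\<Sum>i\<in>UNIV. P i * Q i a k) * W k) * P y * (R a y m'::'k::comm_ring_1)))"
  by (simp add: sum_distrib_left sum_distrib_right mult_ac, rule sum_rot5r[THEN trans], rule sum.cong[OF refl], rule sum_rot4[symmetric, THEN trans], rule sum.cong[OF refl], subst sum.swap, simp add: mult_ac)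

context hinv begin
lemma claim2: "(\<Sum>m\<in>UNIV. s m * mu m) = (\<Sum>m'\<in>UNIV. mu m' * (\<Sum>a\<in>UNIV. \<Sum>y\<in>UNIV. (\<Sum>k\<in>UNIV. (\<Sum>i\<in>UNIV. e i * D i a k) * mu k) * e y * M a y m'))"
proof -
  have "(\<Sum>m\<in>UNIV. s m * mu m) = (\<Sum>m\<in>UNIV. (\<Sum>y\<in>UNIV. e y * (\<Sum>i\<in>UNIV. e i * (\<Sum>a\<in>UNIV. D i a m * (\<Sum>m'\<in>UNIV. M a y m' * mu m')))) * mu m)"
    by (simp only: s_def F1'[symmetric])
  also have "\<dots> = (\<Sum>m'\<in>UNIV. mu m' * (\<Sum>a\<in>UNIV. \<Sum>y\<in>UNIV. (\<Sum>k\<in>UNIV. (\<Sum>i\<in>UNIV. e i * D i a k) * mu k) * e y * M a y m'))"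
    by (rule g3)
  finally show ?thesis .
qed
end

theorem lemma5p2:
  fixes M :: "'n::finite \<Rightarrow> 'n \<Rightarrow> 'n \<Rightarrow> 'k::field"
    and U :: "'n \<Rightarrow> 'k"
    and D :: "'n \<Rightarrow> 'n \<Rightarrow> 'n \<Rightarrow> 'k"
    and E :: "'n \<Rightarrow> 'k"
    and A :: "'n \<Rightarrow> 'n \<Rightarrow> 'k"
    and muR :: "'n \<Rightarrow> 'k"
    and eR :: "'n \<Rightarrow> 'k"
  assumes hopf: "hopf_algebra M U D E A"
    and int: "right_integral M U D muR" and int_nz: "muR \<noteq> (\<lambda>_. 0)"
    and coint: "right_cointegral M E eR" and coint_nz: "eR \<noteq> (\<lambda>_. 0)"
    and norm: "ev muR eR = 1"
  shows "let a = (\<lambda>j. \<Sum>k\<in>UNIV. cop D eR (j, k) * muR k);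
             alpha = (\<lambda>x. ev muR (mul M x eR));
             q = alpha a;
             eL = the_inv (ant A) eR;
             muL = (\<lambda>x. ev muR (ant A x))
         in ant A eR = smul q eL \<and> muL eR = q"
proof -
  have IN: "(\<Sum>i\<in>UNIV. muR i * D x i c) = muR x * U c" for x c
    using fun_cong[OF int[unfolded right_integral_def, rule_format, of "bv x"], of c]
    by (simp add: cop_bv smul_def ev_def) (simp add: bv_def)
  have CO: "(\<Sum>i\<in>UNIV. eR i * M i j k) = E j * eR k" for j k
    using fun_cong[OF coint[unfolded right_cointegral_def, rule_format, of "bv j"], of k]
    by (simp add: mul_def smul_def cou_def bv_def)
  have NORM: "(\<Sum>i\<in>UNIV. muR i * eR i) = 1" using norm by (simp add: ev_def)
  have hh: "hint M U D E A muR"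
    by (rule hint.intro[OF hopf_idx[OF hopf] hint_axioms.intro[OF IN]])
  have hc: "hco M U D E A muR eR"
    by (rule hco.intro[OF hh hco_axioms.intro[OF CO NORM]])
  interpret hco M U D E A muR eR by (rule hc)
  obtain L where LR: "\<And>i c. (\<Sum>w\<in>UNIV. A i w * L w c) = (if i = c then 1 else 0)"
    and LL: "\<And>i c. (\<Sum>w\<in>UNIV. L i w * A w c) = (if i = c then 1 else 0)"
    using two_sided_inverse[OF int_nz coint_nz] by blast
  interpret hinv M U D E A muR eR L
    by (rule hinv.intro[OF hc hinv_axioms.intro[OF LR LL]])
  define T where "T y = (\<lambda>j. \<Sum>i\<in>UNIV. y i * L i j)" for y :: "'n \<Rightarrow> 'k"
  have ST: "ant A (T y) = y" for y
  proof
    fix j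
    have "ant A (T y) j = (\<Sum>k\<in>UNIV. y k * (\<Sum>i\<in>UNIV. L k i * A i j))"
      by (simp add: ant_def T_def sum_distrib_left sum_distrib_right mult_ac, rule sum.swap)
    also have "\<dots> = y j" by (simp add: LL)
    finally show "ant A (T y) j = y j" .
  qed
  have TS: "T (ant A x) = x" for x
  proof
    fix j
    have "T (ant A x) j = (\<Sum>k\<in>UNIV. x k * (\<Sum>i\<in>UNIV. A k i * L i j))"
      by (simp add: ant_def T_def sum_distrib_left sum_distrib_right mult_ac, rule sum.swap)
    also have "\<dots> = x j" by (simp add: LR)
    finally show "T (ant A x) j = x j" .
  qed
  have inj: "inj (ant A)" by (metis TS injI)
  have eL: "the_inv (ant A) eR = T eR"
    by (metis ST inj the_inv_f_f)
  have Tlin: "T (smul c x) = smul c (T x)" for c x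
    by (simp add: T_def smul_def sum_distrib_left mult_ac)
  define q where "q = ev muR (mul M (\<lambda>j. \<Sum>k\<in>UNIV. cop D eR (j, k) * muR k) eR)"
  have sS: "ant A eR = s" by (rule ext, simp add: ant_def s_def)
  have q2: "ev muR (ant A eR) = q"
  proof -
    have "ev muR (ant A eR) = (\<Sum>m\<in>UNIV. s m * muR m)" by (simp add: sS ev_def mult.commute)
    also have "\<dots> = q" by (simp add: claim2 q_def ev_def mul_def cop_def)
    finally show ?thesis .
  qed
  have SS: "ant A (ant A eR) = smul q eR"
  proof
    fix d
    have "ant A (ant A eR) d = (\<Sum>c\<in>UNIV. s c * A c d)" by (simp only: sS, simp add: ant_def)
    also have "\<dots> = eR d * (\<Sum>m\<in>UNIV. s m * muR m)" by (rule claim1)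
    also have "\<dots> = smul q eR d" using q2 by (simp add: smul_def sS ev_def mult.commute)
    finally show "ant A (ant A eR) d = smul q eR d" .
  qed
  have c1: "ant A eR = smul q (the_inv (ant A) eR)"
  proof -
    have "ant A eR = T (ant A (ant A eR))" by (simp add: TS)
    also have "\<dots> = smul q (T eR)" by (simp add: SS Tlin)
    finally show ?thesis by (simp add: eL)
  qed
  show ?thesis unfolding Let_def q_def[symmetric] using c1 q2 by simp
qed


end
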